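(* Let $d\ge2$, $\varphi\in L^1_{loc}(\mathbb{R}^d,dx)$ with $\varphi>0$ $dx$-a.e., $\mu:=\varphi\,dx$, and let $a_{ij}$, $1\le i,j\le d$, be measurable with $a_{ij}=a_{ji}$. Assume the bilinear form $$\mathcal{E}(f,g)=\sum_{i,j=1}^d\int_{\mathbb{R}^d}a_{ij}(x)\partial_if(x)\partial_jg(x)\,\mu(dx),\qquad f,g\in C_0^\infty(\mathbb{R}^d),$$ is well-defined, positive and closable on $L^2(\mathbb{R}^d,\mu)$, with closure $(\mathcal{E},D(\mathcal{E}))$. Suppose there exist a compact set $K\subset\mathbb{R}^d$ and a function $\phi$ on $[0,\infty)$ with $x\mapsto\phi(|x|)$ in $L^1_{loc}(\mathbb{R}^d\setminus K,dx)$ such that $$\|A(x)\|\varphi(x)\le\phi(|x|)\qquad\forall x\in\mathbb{R}^d\setminus K,$$ where $\|A(x)\|=\big(\sum_{i,j=1}^d a_{ij}(x)^2\big)^{1/2}$. Let $\rho>0$ be such that $K\subset B_\rho(0)$ and for $n>\rho$ set $$a_n:=\int_{\overline{B_n(0)}\setminus B_\rho(0)}\frac{|y|^{2-2d}}{\phi(|y|)}\,dy.$$ If $a_n<\infty$ for every $n>\rho$ and $a_n\to\infty$ as $n\to\infty$, then $(\mathcal{E},D(\mathcal{E}))$ is recurrent.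
   Context: $B_r(0)=\{x\in\mathbb{R}^d:|x|<r\}$ and $\overline{B_r(0)}=\{x:|x|\le r\}$, with $|\cdot|$ the Euclidean norm. A closed symmetric form $(\mathcal{E},D(\mathcal{E}))$ on $L^2(\mathbb{R}^d,\mu)$ is called recurrent if there exists $(u_n)_{n\in\mathbb{N}}\subset D(\mathcal{E})$ with $0\le u_n\le1$, $u_n\nearrow1$ $dx$-a.e. as $n\to\infty$, and $\lim_{n\to\infty}\mathcal{E}(u_n,u_n)=0$. *)

theory Defs
  imports "HOL-Analysis.Analysis"
begin

definition pd :: "'n::finite \<Rightarrow> (real^'n \<Rightarrow> real) \<Rightarrow> real^'n \<Rightarrow> real" where
  "pd i f = (\<lambda>x. frechet_derivative f (at x) (axis i 1))"

fun iter_pd :: "'n::finite list \<Rightarrow> (real^'n \<Rightarrow> real) \<Rightarrow> real^'n \<Rightarrow> real" where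
  "iter_pd [] f = f"
| "iter_pd (i # is) f = pd i (iter_pd is f)"

definition smooth_fun :: "(real^'n::finite \<Rightarrow> real) \<Rightarrow> bool" where
  "smooth_fun f \<longleftrightarrow> (\<forall>is x. iter_pd is f differentiable (at x))"

definition C0inf :: "(real^'n::finite \<Rightarrow> real) \<Rightarrow> bool" where
  "C0inf f \<longleftrightarrow> smooth_fun f \<and> compact (closure {x. f x \<noteq> 0})"

definition wmeasure :: "(real^'n::finite \<Rightarrow> real) \<Rightarrow> (real^'n) measure" where
  "wmeasure \<phi> = density lebesgue (\<lambda>x. ennreal (\<phi> x))"

definition Eform :: "('n::finite \<Rightarrow> 'n \<Rightarrow> real^'n \<Rightarrow> real) \<Rightarrow> (real^'n \<Rightarrow> real)
    \<Rightarrow> (real^'n \<Rightarrow> real) \<Rightarrow> (real^'n \<Rightarrow> real) \<Rightarrow> real" where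
  "Eform a \<phi> f g = (\<Sum>i\<in>UNIV. \<Sum>j\<in>UNIV.
      integral\<^sup>L (wmeasure \<phi>) (\<lambda>x. a i j x * pd i f x * pd j g x))"

definition form_well_defined :: "('n::finite \<Rightarrow> 'n \<Rightarrow> real^'n \<Rightarrow> real) \<Rightarrow> (real^'n \<Rightarrow> real) \<Rightarrow> bool" where
  "form_well_defined a \<phi> \<longleftrightarrow> (\<forall>f g i j. C0inf f \<longrightarrow> C0inf g \<longrightarrow>
      integrable (wmeasure \<phi>) (\<lambda>x. a i j x * pd i f x * pd j g x))"

definition form_positive :: "('n::finite \<Rightarrow> 'n \<Rightarrow> real^'n \<Rightarrow> real) \<Rightarrow> (real^'n \<Rightarrow> real) \<Rightarrow> bool" where
  "form_positive a \<phi> \<longleftrightarrow> (\<forall>f. C0inf f \<longrightarrow> Eform a \<phi> f f \<ge> 0)"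

definition L2_conv :: "(real^'n::finite) measure \<Rightarrow> (nat \<Rightarrow> real^'n \<Rightarrow> real) \<Rightarrow> (real^'n \<Rightarrow> real) \<Rightarrow> bool" where
  "L2_conv M f u \<longleftrightarrow> (\<lambda>k. \<integral>\<^sup>+ x. ennreal ((f k x - u x)\<^sup>2) \<partial>M) \<longlonglongrightarrow> 0"

text \<open>Cauchy sequence with respect to the form E (together with L^2 convergence: E_1-Cauchy).\<close>
definition E_cauchy :: "('n::finite \<Rightarrow> 'n \<Rightarrow> real^'n \<Rightarrow> real) \<Rightarrow> (real^'n \<Rightarrow> real) \<Rightarrow> (nat \<Rightarrow> real^'n \<Rightarrow> real) \<Rightarrow> bool" where
  "E_cauchy a \<phi> f \<longleftrightarrow> (\<forall>e>0. \<exists>N. \<forall>k\<ge>N. \<forall>l\<ge>N.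
      Eform a \<phi> (\<lambda>x. f k x - f l x) (\<lambda>x. f k x - f l x) < e)"

definition form_closable :: "('n::finite \<Rightarrow> 'n \<Rightarrow> real^'n \<Rightarrow> real) \<Rightarrow> (real^'n \<Rightarrow> real) \<Rightarrow> bool" where
  "form_closable a \<phi> \<longleftrightarrow> (\<forall>f. (\<forall>k. C0inf (f k)) \<longrightarrow> L2_conv (wmeasure \<phi>) f (\<lambda>_. 0)
      \<longrightarrow> E_cauchy a \<phi> f \<longrightarrow> (\<lambda>k. Eform a \<phi> (f k) (f k)) \<longlonglongrightarrow> 0)"

text \<open>Graph of the closure: u \<in> D(E) with closure value E(u,u) = c.
  (By closability, c is uniquely determined by u.)\<close>
definition closure_graph :: "('n::finite \<Rightarrow> 'n \<Rightarrow> real^'n \<Rightarrow> real) \<Rightarrow> (real^'n \<Rightarrow> real)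
    \<Rightarrow> (real^'n \<Rightarrow> real) \<Rightarrow> real \<Rightarrow> bool" where
  "closure_graph a \<phi> u c \<longleftrightarrow> u \<in> borel_measurable lebesgue \<and>
     (\<integral>\<^sup>+ x. ennreal ((u x)\<^sup>2) \<partial>wmeasure \<phi>) < \<infinity> \<and>
     (\<exists>f. (\<forall>k. C0inf (f k)) \<and> L2_conv (wmeasure \<phi>) f u \<and> E_cauchy a \<phi> f \<and>
          (\<lambda>k. Eform a \<phi> (f k) (f k)) \<longlonglongrightarrow> c)"

definition closure_recurrent :: "('n::finite \<Rightarrow> 'n \<Rightarrow> real^'n \<Rightarrow> real) \<Rightarrow> (real^'n \<Rightarrow> real) \<Rightarrow> bool" where
  "closure_recurrent a \<phi> \<longleftrightarrow> (\<exists>u c. (\<forall>n. closure_graph a \<phi> (u n) (c n)) \<and>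
     (\<forall>n. AE x in lebesgue. 0 \<le> u n x \<and> u n x \<le> 1) \<and>
     (AE x in lebesgue. incseq (\<lambda>n. u n x) \<and> (\<lambda>n. u n x) \<longlonglongrightarrow> 1) \<and>
     c \<longlonglongrightarrow> 0)"

definition matnorm :: "('n::finite \<Rightarrow> 'n \<Rightarrow> real^'n \<Rightarrow> real) \<Rightarrow> real^'n \<Rightarrow> real" where
  "matnorm a x = sqrt (\<Sum>i\<in>UNIV. \<Sum>j\<in>UNIV. (a i j x)\<^sup>2)"

text \<open>a_n, with the convention 1/0 = infinity.\<close>
definition a_seq :: "(real \<Rightarrow> real) \<Rightarrow> real \<Rightarrow> nat \<Rightarrow> ennreal" where
  "a_seq \<Phi> \<rho> n = (\<integral>\<^sup>+ y. indicator (cball (0::real^'n::finite) (real n) - ball 0 \<rho>) y *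
      (if \<Phi> (norm y) = 0 then \<infinity> else ennreal (norm y powr (2 - 2 * real CARD('n)) / \<Phi> (norm y))) \<partial>lebesgue)"

end

theory Submission
  imports Defs
begin

definition closedD :: "(real \<Rightarrow> real) set \<Rightarrow> bool" where
  "closedD F \<longleftrightarrow> (\<forall>f\<in>F. \<exists>f'\<in>F. \<forall>x. (f has_real_derivative f' x) (at x))"

definition smooth1 :: "(real \<Rightarrow> real) \<Rightarrow> bool" where
  "smooth1 f \<longleftrightarrow> (\<exists>F. closedD F \<and> f \<in> F)"

lemma smooth1_poly: "real_polynomial_function p \<Longrightarrow> smooth1 p"
  unfolding smooth1_def
  by (rule exI[of _ "Collect real_polynomial_function"])
     (auto simp: closedD_def dest: has_real_derivative_polynomial_function)

lemma smooth1_deriv: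
  assumes "smooth1 f" obtains f' where "smooth1 f'" "\<And>x. (f has_real_derivative f' x) (at x)"
  using assms unfolding smooth1_def closedD_def by metis

lemma smooth1_differentiable: "smooth1 f \<Longrightarrow> f differentiable (at x)"
  by (metis smooth1_deriv real_differentiable_def)

lemma smooth1_continuous: "smooth1 f \<Longrightarrow> continuous_on S f"
  by (meson continuous_at_imp_continuous_on differentiable_imp_continuous_within smooth1_differentiable)

lemma smooth1_cmult:
  assumes "smooth1 f" shows "smooth1 (\<lambda>x. c * f x)"
proof -
  obtain F where F: "closedD F" "f \<in> F" using assms smooth1_def by auto
  let ?G = "{\<lambda>x. c * g x | g. g \<in> F}"
  have "closedD ?G" unfolding closedD_def
  proof
    fix h assume "h \<in> ?G"
    then obtain g where g: "g \<in> F" "h = (\<lambda>x. c * g x)" by auto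
    then obtain g' where "g' \<in> F" "\<And>x. (g has_real_derivative g' x) (at x)"
      using F(1) closedD_def by blast
    then show "\<exists>f'\<in>?G. \<forall>x. (h has_real_derivative f' x) (at x)"
      using g by (intro bexI[of _ "\<lambda>x. c * g' x"]) (auto intro!: derivative_eq_intros)
  qed
  then show ?thesis using F unfolding smooth1_def by blast
qed

lemma smooth1_affine:
  assumes "smooth1 f" shows "smooth1 (\<lambda>x. f (\<alpha> * x + \<beta>))"
proof -
  obtain F where F: "closedD F" "f \<in> F" using assms smooth1_def by auto
  let ?G = "{\<lambda>x. c * g (\<alpha> * x + \<beta>) | g c. g \<in> F}"
  have "closedD ?G" unfolding closedD_def
  proof
    fix h assume "h \<in> ?G"
    then obtain g c where g: "g \<in> F" "h = (\<lambda>x. c * g (\<alpha> * x + \<beta>))" by auto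
    then obtain g' where g': "g' \<in> F" "\<And>x. (g has_real_derivative g' x) (at x)"
      using F(1) closedD_def by blast
    have "\<And>x. (h has_real_derivative (c*\<alpha>) * g' (\<alpha> * x + \<beta>)) (at x)"
      unfolding g(2)
      by (rule derivative_eq_intros DERIV_chain2[OF g'(2)] | simp)+
    moreover have "(\<lambda>x. (c*\<alpha>) * g' (\<alpha> * x + \<beta>)) \<in> ?G" using g' by blast
    ultimately show "\<exists>f'\<in>?G. \<forall>x. (h has_real_derivative f' x) (at x)"
      by (intro bexI[of _ "\<lambda>x. (c*\<alpha>) * g' (\<alpha> * x + \<beta>)"]) auto
  qed
  moreover have "(\<lambda>x. f (\<alpha> * x + \<beta>)) \<in> ?G" using F by (auto intro!: exI[of _ f] exI[of _ 1])
  ultimately show ?thesis unfolding smooth1_def by blast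
qed

inductive_set prodset :: "(real \<Rightarrow> real) set \<Rightarrow> (real \<Rightarrow> real) set \<Rightarrow> (real \<Rightarrow> real) set"
  for F G where
  "f \<in> F \<Longrightarrow> g \<in> G \<Longrightarrow> (\<lambda>x. f x * g x) \<in> prodset F G"
| "h1 \<in> prodset F G \<Longrightarrow> h2 \<in> prodset F G \<Longrightarrow> (\<lambda>x. h1 x + h2 x) \<in> prodset F G"

lemma closedD_prodset:
  assumes "closedD F" "closedD G" shows "closedD (prodset F G)"
  unfolding closedD_def
proof
  fix h assume "h \<in> prodset F G"
  then show "\<exists>f'\<in>prodset F G. \<forall>x. (h has_real_derivative f' x) (at x)"
  proof induct
    case (1 f g)
    obtain f' where f': "f' \<in> F" "\<And>x. (f has_real_derivative f' x) (at x)"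
      using assms(1) 1 closedD_def by blast
    obtain g' where g': "g' \<in> G" "\<And>x. (g has_real_derivative g' x) (at x)"
      using assms(2) 1 closedD_def by blast
    have "(\<lambda>x. f' x * g x + f x * g' x) \<in> prodset F G"
      using 1 f' g' by (intro prodset.intros) auto
    moreover have "\<And>x. ((\<lambda>x. f x * g x) has_real_derivative f' x * g x + f x * g' x) (at x)"
      using f'(2) g'(2) by (auto intro!: derivative_eq_intros)
    ultimately show ?case by (intro bexI[of _ "\<lambda>x. f' x * g x + f x * g' x"]) auto
  next
    case (2 h1 h2)
    then obtain d1 d2 where "d1 \<in> prodset F G" "d2 \<in> prodset F G"
      "\<And>x. (h1 has_real_derivative d1 x) (at x)" "\<And>x. (h2 has_real_derivative d2 x) (at x)"
      by blast
    then show ?case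
      by (intro bexI[of _ "\<lambda>x. d1 x + d2 x"]) (auto intro!: derivative_eq_intros prodset.intros)
  qed
qed

lemma smooth1_mult:
  assumes "smooth1 f" "smooth1 g" shows "smooth1 (\<lambda>x. f x * g x)"
  using assms closedD_prodset prodset.intros(1) unfolding smooth1_def by blast

lemma smooth1_const: "smooth1 (\<lambda>x. c)"
  by (rule smooth1_poly) auto

definition eP :: "(real \<Rightarrow> real) \<Rightarrow> real \<Rightarrow> real" where
  "eP P x = (if 0 < x then P (1/x) * exp (- (1/x)) else 0)"

lemma poly_exp_lim:
  assumes "real_polynomial_function P"
  shows "((\<lambda>y. y * P y / exp y) \<longlongrightarrow> 0) at_top"
proof -
  obtain a n where P: "P = (\<lambda>x. \<Sum>i\<le>n. a i * x^i)"
    using real_polynomial_function_imp_sum[OF assms] by blast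
  have "((\<lambda>y. \<Sum>i\<le>n. a i * (y ^ Suc i / exp y)) \<longlongrightarrow> (\<Sum>i\<le>n. a i * 0)) at_top"
    by (intro tendsto_sum tendsto_mult tendsto_const tendsto_power_div_exp_0)
  moreover have "(\<lambda>y. \<Sum>i\<le>n. a i * (y ^ Suc i / exp y)) = (\<lambda>y. y * P y / exp y)"
    unfolding P by (auto simp: sum_divide_distrib sum_distrib_left field_simps)
  ultimately show ?thesis by simp
qed

lemma eP_deriv0:
  assumes "real_polynomial_function P"
  shows "(eP P has_real_derivative 0) (at 0)"
proof -
  have R: "((\<lambda>h. eP P h / h) \<longlongrightarrow> 0) (at_right 0)"
  proof -
    have "((\<lambda>h. (\<lambda>y. y * P y / exp y) (inverse h)) \<longlongrightarrow> 0) (at_right 0)"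
      by (rule filterlim_compose[OF poly_exp_lim[OF assms] filterlim_inverse_at_top_right])
    then show ?thesis
      apply (rule filterlim_cong[THEN iffD1, rotated 3])
        apply (auto simp: eventually_at_right_less)
      apply (rule eventually_mono[OF eventually_at_right_less])
      apply (auto simp: eP_def exp_minus field_simps)
      done
  qed
  have L: "((\<lambda>h. eP P h / h) \<longlongrightarrow> 0) (at_left 0)"
    apply (rule tendsto_eventually)
    using eventually_at_left_real[of "-1::real" 0] by (rule eventually_mono) (auto simp: eP_def)
  have "((\<lambda>h. eP P h / h) \<longlongrightarrow> 0) (at 0)"
    using R L by (simp add: filterlim_split_at_real)
  then show ?thesis
    by (simp add: has_field_derivative_iff eP_def)
qed

lemma eP_deriv:
  assumes "real_polynomial_function P"
  obtains Q where "real_polynomial_function Q" "\<And>x. (eP P has_real_derivative eP Q x) (at x)"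
proof -
  obtain P' where P': "real_polynomial_function P'" "\<And>x. (P has_real_derivative P' x) (at x)"
    using has_real_derivative_polynomial_function[OF assms] by blast
  define Q where "Q = (\<lambda>y. (P y - P' y) * y^2)"
  have Q: "real_polynomial_function Q" unfolding Q_def using assms P'(1)
    apply -
    apply (rule real_polynomial_function.intros(4))
     apply (rule real_polynomial_function_diff, assumption, assumption)
    apply (rule real_polynomial_function_power)
    apply (rule real_polynomial_function.intros(1))
    by (rule bounded_linear_ident)
  have "(eP P has_real_derivative eP Q x) (at x)" for x
  proof (cases x "0::real" rule: linorder_cases)
    case less
    have "((\<lambda>x. 0) has_real_derivative eP Q x) (at x)" using less by (simp add: eP_def)
    then show ?thesis
      apply (rule has_field_derivative_transform_within_open[where S="{..<0}"])
      using less by (auto simp: eP_def)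
  next
    case equal
    then show ?thesis using eP_deriv0[OF assms] by (simp add: eP_def)
  next
    case greater
    have "((\<lambda>x. P (1/x) * exp (- (1/x))) has_real_derivative
           P' (1/x) * (- 1 / x^2) * exp (- (1/x)) + P (1/x) * (exp (- (1/x)) * (1 / x^2))) (at x)"
      using greater
      by (auto intro!: derivative_eq_intros DERIV_chain2[OF P'(2)] simp: power2_eq_square)
    then have "((\<lambda>x. P (1/x) * exp (- (1/x))) has_real_derivative eP Q x) (at x)"
      using greater by (simp add: eP_def Q_def field_simps power2_eq_square)
    then show ?thesis
      apply (rule has_field_derivative_transform_within_open[where S="{0<..}"])
      using greater by (auto simp: eP_def)
  qed
  then show ?thesis using Q that by blast
qed

lemma smooth1_eP: "real_polynomial_function P \<Longrightarrow> smooth1 (eP P)"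
  unfolding smooth1_def
  apply (rule exI[of _ "{eP P | P. real_polynomial_function P}"])
  apply (auto simp: closedD_def)
  by (metis eP_deriv)

definition E0 :: "real \<Rightarrow> real" where "E0 = eP (\<lambda>_. 1)"

lemma smooth1_E0: "smooth1 E0"
  unfolding E0_def by (rule smooth1_eP) auto

lemma E0_pos: "x > 0 \<Longrightarrow> E0 x > 0" and E0_zero: "x \<le> 0 \<Longrightarrow> E0 x = 0"
  and E0_le1: "E0 x \<le> 1" and E0_nonneg: "E0 x \<ge> 0"
  by (auto simp: E0_def eP_def)

lemma E0_mono: "x \<le> y \<Longrightarrow> E0 x \<le> E0 y"
  by (auto simp: E0_def eP_def divide_simps)

lemma smooth1_add:
  assumes "smooth1 f" "smooth1 g" shows "smooth1 (\<lambda>x. f x + g x)"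
proof -
  obtain F where F: "closedD F" "f \<in> F" using assms smooth1_def by auto
  obtain G where G: "closedD G" "g \<in> G" using assms smooth1_def by auto
  let ?H = "{\<lambda>x. f x + g x | f g. f \<in> F \<and> g \<in> G}"
  have "closedD ?H" unfolding closedD_def
  proof
    fix h assume "h \<in> ?H"
    then obtain f1 g1 where fg: "f1 \<in> F" "g1 \<in> G" "h = (\<lambda>x. f1 x + g1 x)" by auto
    obtain f' where f': "f' \<in> F" "\<And>x. (f1 has_real_derivative f' x) (at x)"
      using F(1) fg closedD_def by blast
    obtain g' where g': "g' \<in> G" "\<And>x. (g1 has_real_derivative g' x) (at x)"
      using G(1) fg closedD_def by blast
    show "\<exists>f'\<in>?H. \<forall>x. (h has_real_derivative f' x) (at x)"
      using f' g' fg by (intro bexI[of _ "\<lambda>x. f' x + g' x"]) (auto intro!: derivative_eq_intros)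
  qed
  then show ?thesis using F G unfolding smooth1_def by blast
qed

lemma antideriv_deriv:
  fixes \<psi> :: "real \<Rightarrow> real"
  assumes cont: "continuous_on UNIV \<psi>" and zero: "\<And>x. x \<le> a \<Longrightarrow> \<psi> x = 0"
  shows "((\<lambda>s. integral {a-1..s} \<psi>) has_real_derivative \<psi> s) (at s)"
proof (cases "s < a")
  case True
  have "((\<lambda>s. 0) has_real_derivative \<psi> s) (at s)" using True zero by simp
  then show ?thesis
  proof (rule has_field_derivative_transform_within_open[where S="{..<a}"])
    fix t assume "t \<in> {..<a}"
    then have "integral {a-1..t} \<psi> = integral {a-1..t} (\<lambda>_. 0::real)"
      by (intro integral_cong) (auto intro!: zero)
    then show "0 = integral {a-1..t} \<psi>" by simp
  qed (use True in auto)
next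
  case False
  have "((\<lambda>s. integral {a-1..s} \<psi>) has_real_derivative \<psi> s) (at s within {a-1..s+1})"
    by (rule integral_has_real_derivative) (use False cont continuous_on_subset in auto)
  moreover have "at s within {a-1..s+1} = at s" using False by (intro at_within_Icc_at) auto
  ultimately show ?thesis by simp
qed

lemma smooth1_antideriv:
  fixes \<psi> :: "real \<Rightarrow> real"
  assumes "smooth1 \<psi>" and zero: "\<And>x. x \<le> a \<Longrightarrow> \<psi> x = 0"
  shows "smooth1 (\<lambda>s. integral {a-1..s} \<psi>)"
proof -
  obtain F where F: "closedD F" "\<psi> \<in> F" using assms smooth1_def by auto
  have "closedD (insert (\<lambda>s. integral {a-1..s} \<psi>) F)"
    using F antideriv_deriv[OF smooth1_continuous[OF assms(1)] zero] unfolding closedD_def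
    by blast
  then show ?thesis unfolding smooth1_def by blast
qed

section \<open>Smoothness in R^n\<close>

definition closedPD :: "(real^'n::finite \<Rightarrow> real) set \<Rightarrow> bool" where
  "closedPD F \<longleftrightarrow> (\<forall>f\<in>F. \<exists>D. (\<forall>x. (f has_derivative D x) (at x)) \<and> (\<forall>i. (\<lambda>x. D x (axis i 1)) \<in> F))"

lemma closedPD_iter:
  assumes "closedPD F" "f \<in> F" shows "iter_pd js f \<in> F"
proof (induction js)
  case Nil then show ?case using assms by simp
next
  case (Cons i js)
  obtain D where D: "\<And>x. (iter_pd js f has_derivative D x) (at x)" "(\<lambda>x. D x (axis i 1)) \<in> F"
    using assms(1) Cons closedPD_def by metis
  have "pd i (iter_pd js f) = (\<lambda>x. D x (axis i 1))"
    unfolding pd_def using D(1) frechet_derivative_at by metis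
  then show ?case using D by simp
qed

lemma closedPD_smooth:
  assumes "closedPD F" "f \<in> F" shows "smooth_fun f"
  unfolding smooth_fun_def
proof (intro allI)
  fix js x
  obtain D where "\<And>x. (iter_pd js f has_derivative D x) (at x)"
    using closedPD_iter[OF assms] assms(1) closedPD_def by metis
  then show "iter_pd js f differentiable (at x)" unfolding differentiable_def by blast
qed

inductive_set Rq :: "(real \<Rightarrow> real) set \<Rightarrow> (real^'n::finite \<Rightarrow> real) set" for F1 where
  comp: "g \<in> F1 \<Longrightarrow> (\<lambda>x. g (x \<bullet> x)) \<in> Rq F1"
| coord: "(\<lambda>x. x $ i) \<in> Rq F1"
| const: "(\<lambda>x. c) \<in> Rq F1"
| add: "f \<in> Rq F1 \<Longrightarrow> g \<in> Rq F1 \<Longrightarrow> (\<lambda>x. f x + g x) \<in> Rq F1"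
| mult: "f \<in> Rq F1 \<Longrightarrow> g \<in> Rq F1 \<Longrightarrow> (\<lambda>x. f x * g x) \<in> Rq F1"

lemma closedPD_Rq:
  assumes F1: "closedD F1" shows "closedPD (Rq F1 :: (real^'n::finite \<Rightarrow> real) set)"
  unfolding closedPD_def
proof
  fix f :: "real^'n \<Rightarrow> real" assume "f \<in> Rq F1"
  then show "\<exists>D. (\<forall>x. (f has_derivative D x) (at x)) \<and> (\<forall>i. (\<lambda>x. D x (axis i 1)) \<in> Rq F1)"
  proof induct
    case (comp g)
    obtain g' where g': "g' \<in> F1" "\<And>x. (g has_real_derivative g' x) (at x)"
      using F1 comp closedD_def by blast
    have "((\<lambda>x. g (x \<bullet> x)) has_derivative (\<lambda>h. (x \<bullet> h + h \<bullet> x) * g' (x \<bullet> x))) (at x)" for x :: "real^'n"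
      by (rule DERIV_compose_FDERIV[where g="\<lambda>x. x \<bullet> x", OF g'(2)]) (auto intro!: derivative_eq_intros)
    moreover have "(\<lambda>x::real^'n. (x \<bullet> axis i 1 + axis i 1 \<bullet> x) * g' (x \<bullet> x)) \<in> Rq F1" for i
    proof -
      have "(\<lambda>x::real^'n. (x $ i + x $ i) * g' (x \<bullet> x)) \<in> Rq F1"
        by (intro Rq.intros g')
      then show ?thesis by (simp add: inner_axis inner_axis')
    qed
    ultimately show ?case
      by (intro exI[of _ "\<lambda>x h. (x \<bullet> h + h \<bullet> x) * g' (x \<bullet> x)"] conjI allI) auto
  next
    case (coord i)
    have "((\<lambda>x::real^'n. x $ i) has_derivative (\<lambda>h. h $ i)) (at x)" for x
      by (rule bounded_linear.has_derivative[OF bounded_linear_vec_nth has_derivative_ident])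
    moreover have "(\<lambda>x::real^'n. (axis j 1 :: real^'n) $ i) \<in> Rq F1" for j
      by (rule Rq.const)
    ultimately show ?case by (intro exI[of _ "\<lambda>x h. h $ i"] conjI allI) auto
  next
    case (const c)
    have "((\<lambda>x::real^'n. c) has_derivative (\<lambda>h. 0)) (at x)" for x by simp
    moreover have "(\<lambda>x::real^'n. 0) \<in> Rq F1" by (rule Rq.const)
    ultimately show ?case by (intro exI[of _ "\<lambda>x h. 0"] conjI allI) auto
  next
    case (add f g)
    then obtain Df Dg where "\<And>x. (f has_derivative Df x) (at x)" "\<And>i. (\<lambda>x. Df x (axis i 1)) \<in> Rq F1"
      "\<And>x. (g has_derivative Dg x) (at x)" "\<And>i. (\<lambda>x. Dg x (axis i 1)) \<in> Rq F1" by metis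
    then show ?case
      by (intro exI[of _ "\<lambda>x h. Df x h + Dg x h"]) (auto intro!: derivative_eq_intros Rq.intros)
  next
    case (mult f g)
    then obtain Df Dg where "\<And>x. (f has_derivative Df x) (at x)" "\<And>i. (\<lambda>x. Df x (axis i 1)) \<in> Rq F1"
      "\<And>x. (g has_derivative Dg x) (at x)" "\<And>i. (\<lambda>x. Dg x (axis i 1)) \<in> Rq F1" by metis
    then show ?case using mult(1,3)
      by (intro exI[of _ "\<lambda>x h. f x * Dg x h + Df x h * g x"]) (auto intro!: derivative_eq_intros Rq.intros)
  qed
qed

lemma smooth_fun_comp_q:
  assumes "smooth1 G" shows "smooth_fun (\<lambda>x::real^'n::finite. G (x \<bullet> x))"
proof -
  obtain F where "closedD F" "G \<in> F" using assms smooth1_def by auto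
  then show ?thesis using closedPD_smooth[OF closedPD_Rq] Rq.comp by blast
qed

lemma pd_comp_q:
  assumes "(G has_real_derivative G' (x \<bullet> x)) (at (x \<bullet> x))"
  shows "pd i (\<lambda>x::real^'n::finite. G (x \<bullet> x)) x = 2 * x $ i * G' (x \<bullet> x)"
proof -
  have "((\<lambda>x. G (x \<bullet> x)) has_derivative (\<lambda>h. (x \<bullet> h + h \<bullet> x) * G' (x \<bullet> x))) (at x)"
    by (rule DERIV_compose_FDERIV[where g="\<lambda>x. x \<bullet> x", OF assms]) (auto intro!: derivative_eq_intros)
  then have "frechet_derivative (\<lambda>x. G (x \<bullet> x)) (at x) = (\<lambda>h. (x \<bullet> h + h \<bullet> x) * G' (x \<bullet> x))"
    by (rule frechet_derivative_at[symmetric])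
  then show ?thesis unfolding pd_def by (simp add: inner_axis inner_axis')
qed

definition pdens :: "nat \<Rightarrow> real \<Rightarrow> real" where
  "pdens d r = indicator {0..} r * (real d * unit_ball_vol (real d) * r ^ (d - 1))"

lemma pdens_nonneg: "pdens d r \<ge> 0"
  by (auto simp: pdens_def indicator_def)

lemma pdens_borel[measurable]: "pdens d \<in> borel_measurable borel"
  unfolding pdens_def by measurable

lemma distr_norm:
  assumes d: "DIM('a::euclidean_space) \<ge> 1"
  shows "distr lborel borel (norm :: 'a \<Rightarrow> real) = density lborel (\<lambda>r. ennreal (pdens DIM('a) r))"
    (is "?M = ?N")
proof (rule measure_eqI_generator_eq_countable[where E="range atMost" and \<Omega>=UNIV and A="range (\<lambda>n::nat. {..real n})"])
  show "Int_stable (range atMost :: real set set)"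
    by (auto simp: Int_stable_def)
  show "range atMost \<subseteq> Pow (UNIV::real set)" by auto
  have "sets (borel::real measure) = sigma_sets UNIV (range atMost)"
    by (subst borel_eq_atMost) (simp add: sets_measure_of)
  then show "sets ?M = sigma_sets UNIV (range atMost)" "sets ?N = sigma_sets UNIV (range atMost)"
    by simp_all
  have V: "unit_ball_vol (real DIM('a)) \<ge> 0" by simp
  have eq: "emeasure ?M {..t} = emeasure ?N {..t}" for t
  proof -
    have "emeasure ?M {..t} = emeasure lborel {x::'a. norm x \<le> t}"
      by (subst emeasure_distr) (auto simp: vimage_def)
    also have "\<dots> = (if t < 0 then 0 else ennreal (unit_ball_vol (DIM('a)) * t ^ DIM('a)))"
    proof (cases "t < 0")
      case True
      have "{x::'a. norm x \<le> t} = {}"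
      proof -
        { fix x::'a assume "norm x \<le> t" hence False using norm_ge_zero[of x] True by linarith }
        thus ?thesis by auto
      qed
      then show ?thesis using True by simp
    next
      case False
      have "{x::'a. norm x \<le> t} = cball 0 t" by (auto simp: dist_norm)
      then show ?thesis using False emeasure_cball[of t "0::'a"] by simp
    qed
    also have "\<dots> = emeasure ?N {..t}"
    proof (cases "t < 0")
      case True
      have "emeasure ?N {..t} = (\<integral>\<^sup>+ r. ennreal (pdens DIM('a) r) * indicator {..t} r \<partial>lborel)"
        by (subst emeasure_density) auto
      also have "\<dots> = (\<integral>\<^sup>+ r. (0::ennreal) \<partial>(lborel::real measure))"
        by (rule nn_integral_cong) (use True in \<open>auto simp: pdens_def indicator_def\<close>)
      finally show ?thesis using True by simp
    next
      case False
      have "emeasure ?N {..t} = (\<integral>\<^sup>+ r. ennreal (pdens DIM('a) r) * indicator {..t} r \<partial>lborel)"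
        by (subst emeasure_density) auto
      also have "\<dots> = (\<integral>\<^sup>+ r\<in>{0..t}. ennreal (real DIM('a) * unit_ball_vol (real DIM('a)) * r ^ (DIM('a) - 1)) \<partial>lborel)"
        by (intro nn_integral_cong) (auto simp: pdens_def indicator_def)
      also have "\<dots> = ennreal (unit_ball_vol (real DIM('a)) * t ^ DIM('a) - unit_ball_vol (real DIM('a)) * 0 ^ DIM('a))"
      proof (rule nn_integral_FTC_Icc)
        fix x :: real assume "x \<in> {0..t}"
        show "((\<lambda>r. unit_ball_vol (real DIM('a)) * r ^ DIM('a)) has_real_derivative
               real DIM('a) * unit_ball_vol (real DIM('a)) * x ^ (DIM('a) - 1)) (at x)"
          by (auto intro!: derivative_eq_intros)
        show "0 \<le> real DIM('a) * unit_ball_vol (real DIM('a)) * x ^ (DIM('a) - 1)"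
          using \<open>x \<in> {0..t}\<close> V by (auto intro!: mult_nonneg_nonneg)
      qed (use False in auto)
      finally show ?thesis using False d by simp
    qed
    finally show ?thesis .
  qed
  show "\<And>X. X \<in> range atMost \<Longrightarrow> emeasure ?M X = emeasure ?N X"
    using eq by auto
  show "range (\<lambda>n::nat. {..real n}) \<subseteq> range atMost" by auto
  show "\<Union> (range (\<lambda>n::nat. {..real n})) = UNIV"
    by (auto intro: real_arch_simple)
  show "countable (range (\<lambda>n::nat. {..real n}))" by auto
  show "emeasure ?M a \<noteq> \<infinity>" if ha: "a \<in> range (\<lambda>n::nat. {..real n})" for a
  proof -
    obtain n where a: "a = {..real n}" using ha by auto
    have "emeasure ?M a = emeasure lborel {x::'a. norm x \<le> real n}"
      unfolding a by (subst emeasure_distr) (auto simp: vimage_def)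
    also have "{x::'a. norm x \<le> real n} = cball 0 (real n)" by (auto simp: dist_norm)
    finally show ?thesis using emeasure_lborel_cball_finite[of "0::'a" "real n"] by auto
  qed
qed

lemma polar_nn:
  fixes h :: "real \<Rightarrow> ennreal"
  assumes d: "DIM('a::euclidean_space) \<ge> 1" and h[measurable]: "h \<in> borel_measurable borel"
  shows "(\<integral>\<^sup>+ x. h (norm (x::'a)) \<partial>lborel) = (\<integral>\<^sup>+ r. ennreal (pdens DIM('a) r) * h r \<partial>lborel)"
proof -
  have "(\<integral>\<^sup>+ x. h (norm (x::'a)) \<partial>lborel) = (\<integral>\<^sup>+ r. h r \<partial>distr lborel borel (norm :: 'a \<Rightarrow> real))"
    by (subst nn_integral_distr) auto
  also have "\<dots> = (\<integral>\<^sup>+ r. ennreal (pdens DIM('a) r) * h r \<partial>lborel)"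
    unfolding distr_norm[OF d] by (subst nn_integral_density) auto
  finally show ?thesis .
qed

lemma nn_integral_zero_same:
  assumes [measurable]: "f \<in> borel_measurable M" "g \<in> borel_measurable M"
    and "\<And>x. f x = 0 \<longleftrightarrow> g x = 0"
  shows "integral\<^sup>N M f = 0 \<longleftrightarrow> integral\<^sup>N M g = 0"
  using assms(3) by (simp add: nn_integral_0_iff_AE)

lemma null_transfer:
  fixes D :: "real set"
  assumes d: "DIM('a::euclidean_space) \<ge> 1" and D[measurable]: "D \<in> sets borel"
    and sub: "D \<subseteq> {a..b}" and a: "0 < a" and ab0: "a \<le> b"
  shows "emeasure lborel {x::'a. x \<bullet> x \<in> D} = 0 \<longleftrightarrow> emeasure lborel D = 0"
proof -
  have ab: "a \<le> b" if "D \<noteq> {}" using sub that by auto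
  have meas: "{x::'a. x \<bullet> x \<in> D} \<in> sets lborel" by measurable
  have "emeasure lborel {x::'a. x \<bullet> x \<in> D} = (\<integral>\<^sup>+ x. indicator {x::'a. x \<bullet> x \<in> D} x \<partial>lborel)"
    by (rule nn_integral_indicator[OF meas, symmetric])
  also have "\<dots> = (\<integral>\<^sup>+ x. indicator D (norm x ^ 2) \<partial>(lborel::'a measure))"
    by (rule nn_integral_cong) (auto simp: power2_norm_eq_inner indicator_def)
  also have "\<dots> = (\<integral>\<^sup>+ r. ennreal (pdens DIM('a) r) * indicator D (r ^ 2) \<partial>lborel)"
    by (rule polar_nn[OF d, where h="\<lambda>r. indicator D (r^2)"]) measurable
  finally have 1: "emeasure lborel {x::'a. x \<bullet> x \<in> D} = (\<integral>\<^sup>+ r. ennreal (pdens DIM('a) r) * indicator D (r ^ 2) \<partial>lborel)" .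
  have "emeasure lborel D = (\<integral>\<^sup>+ s. ennreal (indicator D s * indicator {0^2..(sqrt b)^2} s) \<partial>lborel)"
  proof (cases "D = {}")
    case False
    then have "b \<ge> 0" using ab a by auto
    have "emeasure lborel D = (\<integral>\<^sup>+ s. indicator D s \<partial>lborel)"
      by (rule nn_integral_indicator[symmetric]) simp
    also have "\<dots> = (\<integral>\<^sup>+ s. ennreal (indicator D s * indicator {0^2..(sqrt b)^2} s) \<partial>lborel)"
      by (rule nn_integral_cong) (use sub a \<open>b \<ge> 0\<close> in \<open>auto simp: indicator_def\<close>)
    finally show ?thesis .
  qed simp
  also have "\<dots> = (\<integral>\<^sup>+ r. ennreal (indicator D (r^2) * (2 * r) * indicator {0..sqrt b} r) \<partial>lborel)"
    by (rule nn_integral_substitution[where g="\<lambda>r. r^2"])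
       (use a ab0 in \<open>auto simp: set_borel_measurable_def intro!: derivative_eq_intros continuous_intros\<close>)
  finally have 2: "emeasure lborel D = (\<integral>\<^sup>+ r. ennreal (indicator D (r^2) * (2 * r) * indicator {0..sqrt b} r) \<partial>lborel)" .
  have key: "(ennreal (pdens DIM('a) r) * indicator D (r ^ 2) = 0) \<longleftrightarrow>
       (ennreal (indicator D (r^2) * (2 * r) * indicator {0..sqrt b} r) = 0)" for r
  proof (cases "r^2 \<in> D")
    case True
    then have "r^2 \<ge> a" "r^2 \<le> b" using sub by auto
    then have "r \<noteq> 0" using a by auto
    have "r \<le> sqrt b" using \<open>r^2 \<le> b\<close> real_le_rsqrt by blast
    moreover have "unit_ball_vol (real DIM('a)) > 0" by simp
    ultimately show ?thesis using True \<open>r \<noteq> 0\<close> d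
      by (cases "r > 0") (auto simp: pdens_def indicator_def ennreal_eq_0_iff not_le)
  qed (auto simp: indicator_def)
  show ?thesis unfolding 1 2
    by (rule nn_integral_zero_same) (use key in auto)
qed

lemma ennreal_small_zero:
  fixes x :: ennreal
  assumes "\<And>k::nat. x \<le> ennreal (2 / (real k + 1))"
  shows "x = 0"
proof -
  have "x \<le> 0 + ennreal e" if "e > 0" for e
  proof -
    obtain k :: nat where "2 / e < real k" using reals_Archimedean2 by blast
    then have "2 / (real k + 1) < e" using that by (simp add: field_simps)
    then have "ennreal (2 / (real k + 1)) \<le> ennreal e" by (intro ennreal_leI) simp
    then show ?thesis using assms[of k] by simp
  qed
  then have "x \<le> 0" by (rule ennreal_le_epsilon)
  then show ?thesis by simp
qed

lemma radial_sets_lebesgue: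
  fixes B :: "real set"
  assumes d: "DIM('a::euclidean_space) \<ge> 1" and sub: "B \<subseteq> {a..b}" and a: "0 < a" and ab: "a \<le> b"
    and E: "{x::'a. x \<bullet> x \<in> B} \<in> sets lebesgue"
  shows "B \<in> sets lebesgue"
proof -
  define q where "q = (\<lambda>x::'a. x \<bullet> x)"
  have qc: "continuous_on S q" for S unfolding q_def by (intro continuous_intros)
  define Q where "Q = {x::'a. a \<le> q x \<and> q x \<le> b}"
  define EE where "EE = {x::'a. x \<bullet> x \<in> B}"
  have EQ: "EE \<subseteq> Q" using sub unfolding EE_def Q_def q_def by auto
  have nb: "norm x \<le> sqrt b \<longleftrightarrow> norm x ^ 2 \<le> b" for x :: 'a
  proof
    assume "norm x \<le> sqrt b"
    then have "norm x ^ 2 \<le> (sqrt b) ^ 2" by (intro power_mono) auto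
    then show "norm x ^ 2 \<le> b" using ab a by simp
  next
    assume "norm x ^ 2 \<le> b" then show "norm x \<le> sqrt b" by (rule real_le_rsqrt)
  qed
  have qn: "q x = norm x ^ 2" for x by (simp add: q_def power2_norm_eq_inner)
  have cb: "x \<in> cball 0 (sqrt b) \<longleftrightarrow> q x \<le> b" for x
    unfolding mem_cball dist_0_norm qn by (rule nb)
  have "Q = cball 0 (sqrt b) \<inter> {x. a \<le> q x}"
    unfolding Q_def using cb by blast
  moreover have "closed {x. a \<le> q x}"
    by (rule closed_Collect_le) (auto intro: qc continuous_on_const)
  ultimately have Qc: "compact Q" by (simp add: compact_Int_closed)
  have "\<forall>k::nat. \<exists>C. closed C \<and> C \<subseteq> EE \<and> EE - C \<in> lmeasurable \<and> emeasure lebesgue (EE - C) < ennreal (1 / (real k + 1))"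
  proof
    fix k :: nat
    show "\<exists>C. closed C \<and> C \<subseteq> EE \<and> EE - C \<in> lmeasurable \<and> emeasure lebesgue (EE - C) < ennreal (1 / (real k + 1))"
      by (rule sets_lebesgue_inner_closed[of EE "1 / (real k + 1)"]) (use E in \<open>auto simp: EE_def\<close>)
  qed
  then obtain C where C: "\<And>k. closed (C k)" "\<And>k. C k \<subseteq> EE" "\<And>k. EE - C k \<in> lmeasurable"
    "\<And>k. emeasure lebesgue (EE - C k) < ennreal (1 / (real k + 1))" by metis
  have "\<forall>k::nat. \<exists>U. open U \<and> EE \<subseteq> U \<and> U - EE \<in> lmeasurable \<and> emeasure lebesgue (U - EE) < ennreal (1 / (real k + 1))"
  proof
    fix k :: nat
    show "\<exists>U. open U \<and> EE \<subseteq> U \<and> U - EE \<in> lmeasurable \<and> emeasure lebesgue (U - EE) < ennreal (1 / (real k + 1))"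
      by (rule sets_lebesgue_outer_open[of EE "1 / (real k + 1)"]) (use E in \<open>auto simp: EE_def\<close>)
  qed
  then obtain U where U: "\<And>k. open (U k)" "\<And>k. EE \<subseteq> U k" "\<And>k. U k - EE \<in> lmeasurable"
    "\<And>k. emeasure lebesgue (U k - EE) < ennreal (1 / (real k + 1))" by metis
  define Lo where "Lo = (\<Union>k. q ` C k)"
  define Hi where "Hi = (\<Inter>k. {a..b} - q ` (Q - U k))"
  have CQ: "compact (C k)" for k
  proof -
    have "C k = C k \<inter> Q" using C(2) EQ by auto
    then show ?thesis using closed_Int_compact[OF C(1) Qc] by metis
  qed
  have QU: "compact (Q - U k)" for k
    using compact_diff[OF Qc U(1)] .
  have "q ` C k \<in> sets borel" for k
    by (intro borel_closed compact_imp_closed compact_continuous_image CQ qc)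
  then have Lo_b: "Lo \<in> sets borel"
    unfolding Lo_def by (intro sets.countable_UN) auto
  have "q ` (Q - U k) \<in> sets borel" for k
    by (intro borel_closed compact_imp_closed compact_continuous_image QU qc)
  then have "{a..b} - q ` (Q - U k) \<in> sets borel" for k by auto
  then have Hi_b: "Hi \<in> sets borel"
    unfolding Hi_def by (intro sets.countable_INT') auto
  have LoB: "Lo \<subseteq> B" unfolding Lo_def using C(2) by (auto simp: EE_def q_def)
  have BHi: "B \<subseteq> Hi"
  proof
    fix y assume y: "y \<in> B"
    show "y \<in> Hi" unfolding Hi_def
    proof (safe)
      fix k show "y \<in> {a..b}" using y sub by auto
      fix x assume "x \<in> Q" "x \<notin> U k" "y = q x"
      then show False using y U(2)[of k] by (auto simp: EE_def q_def)
    qed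
  qed
  define N where "N = {x::'a. x \<bullet> x \<in> Hi - Lo}"
  have Nsub: "N \<subseteq> (U k - EE) \<union> (EE - C k)" for k
  proof
    fix x assume "x \<in> N"
    then have x: "q x \<in> Hi" "q x \<notin> Lo" by (auto simp: N_def q_def)
    then have "q x \<in> {a..b}" "q x \<notin> q ` (Q - U k)" unfolding Hi_def by auto
    then have "x \<in> U k" unfolding Q_def by auto
    moreover have "x \<notin> C k" using x(2) unfolding Lo_def by auto
    ultimately show "x \<in> (U k - EE) \<union> (EE - C k)" by auto
  qed
  have Nb: "N \<in> sets lborel" unfolding N_def using Hi_b Lo_b by measurable
  have "emeasure lborel N \<le> ennreal (2 / (real k + 1))" for k
  proof -
    have "emeasure lborel N = emeasure lebesgue N" using Nb by (simp add: emeasure_completion)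
    also have "\<dots> \<le> emeasure lebesgue ((U k - EE) \<union> (EE - C k))"
      by (rule emeasure_mono[OF Nsub]) (use U(3) C(3) in auto)
    also have "\<dots> \<le> emeasure lebesgue (U k - EE) + emeasure lebesgue (EE - C k)"
      by (rule emeasure_subadditive) (use U(3) C(3) in auto)
    also have "\<dots> \<le> ennreal (1 / (real k + 1)) + ennreal (1 / (real k + 1))"
      using U(4)[of k] C(4)[of k] by (intro add_mono) auto
    also have "\<dots> = ennreal (2 / (real k + 1))"
      by (subst ennreal_plus[symmetric]) auto
    finally show ?thesis .
  qed
  then have "emeasure lborel N = 0" by (rule ennreal_small_zero)
  then have "emeasure lborel (Hi - Lo) = 0"
    unfolding N_def
    by (subst null_transfer[OF d _ _ a ab, symmetric]) (use Hi_b Lo_b in \<open>auto simp: Hi_def\<close>)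
  then have "Hi - Lo \<in> null_sets lborel" using Hi_b Lo_b by (auto simp: null_sets_def)
  then have "B - Lo \<in> null_sets lebesgue"
    unfolding null_sets_completion_iff2 using BHi by (intro bexI[of _ "Hi - Lo"]) auto
  then have "B - Lo \<in> sets lebesgue" by auto
  moreover have "Lo \<in> sets lebesgue" using Lo_b by auto
  ultimately have "(B - Lo) \<union> Lo \<in> sets lebesgue" by (rule sets.Un)
  moreover have "(B - Lo) \<union> Lo = B" using LoB by auto
  ultimately show ?thesis by simp
qed

lemma cont_meas_leb:
  fixes f :: "'a::euclidean_space \<Rightarrow> 'b::euclidean_space"
  assumes "continuous_on UNIV f" shows "f \<in> borel_measurable lebesgue"
  by (rule measurable_completion) (simp add: borel_measurable_continuous_onI assms)

lemma CS_quadform: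
  fixes A :: "'n::finite \<Rightarrow> 'n \<Rightarrow> real" and v :: "'n \<Rightarrow> real"
  shows "(\<Sum>i\<in>UNIV. \<Sum>j\<in>UNIV. A i j * v i * v j) \<le> sqrt (\<Sum>i\<in>UNIV. \<Sum>j\<in>UNIV. (A i j)\<^sup>2) * (\<Sum>i\<in>UNIV. (v i)\<^sup>2)"
proof -
  let ?f = "\<lambda>p::'n\<times>'n. A (fst p) (snd p)" and ?g = "\<lambda>p::'n\<times>'n. v (fst p) * v (snd p)"
  have "(\<Sum>i\<in>UNIV. \<Sum>j\<in>UNIV. A i j * v i * v j) = (\<Sum>p\<in>UNIV\<times>UNIV. ?f p * ?g p)"
    by (subst sum.cartesian_product) (simp add: case_prod_beta mult.assoc)
  also have "\<dots> \<le> (\<Sum>p\<in>UNIV\<times>UNIV. \<bar>?f p\<bar> * \<bar>?g p\<bar>)"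
    by (intro sum_mono) (metis abs_ge_self abs_mult)
  also have "\<dots> \<le> L2_set ?f (UNIV\<times>UNIV) * L2_set ?g (UNIV\<times>UNIV)" by (rule L2_set_mult_ineq)
  also have "L2_set ?f (UNIV\<times>UNIV) = sqrt (\<Sum>i\<in>UNIV. \<Sum>j\<in>UNIV. (A i j)\<^sup>2)"
    unfolding L2_set_def
    by (subst sum.cartesian_product) (simp add: case_prod_beta)
  also have "L2_set ?g (UNIV\<times>UNIV) = sqrt ((\<Sum>i\<in>UNIV. (v i)\<^sup>2)\<^sup>2)"
  proof -
    have "(\<Sum>p\<in>UNIV\<times>UNIV. (?g p)\<^sup>2) = (\<Sum>i\<in>UNIV. \<Sum>j\<in>UNIV. (v i)\<^sup>2 * (v j)\<^sup>2)"
      unfolding sum.cartesian_product by (simp add: power_mult_distrib case_prod_beta)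
    also have "\<dots> = (\<Sum>i\<in>UNIV. (v i)\<^sup>2)\<^sup>2" by (simp add: power2_eq_square sum_product)
    finally show ?thesis unfolding L2_set_def by simp
  qed
  also have "\<dots> = (\<Sum>i\<in>UNIV. (v i)\<^sup>2)" by (simp add: sum_nonneg)
  finally show ?thesis .
qed

lemma energy_bound:
  fixes a :: "'n::finite \<Rightarrow> 'n \<Rightarrow> real^'n \<Rightarrow> real" and \<phi> :: "real^'n \<Rightarrow> real"
    and \<Phi> :: "real \<Rightarrow> real" and K :: "(real^'n) set"
    and G G' :: "real \<Rightarrow> real"
  assumes phi_meas: "\<phi> \<in> borel_measurable lebesgue"
    and phi_pos: "AE x in lebesgue. \<phi> x > 0"
    and a_meas: "\<And>i j. a i j \<in> borel_measurable lebesgue"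
    and wd: "form_well_defined a \<phi>"
    and Phi_loc: "\<And>S. compact S \<Longrightarrow> S \<subseteq> - K \<Longrightarrow> set_integrable lebesgue S (\<lambda>x. \<Phi> (norm x))"
    and bound: "\<And>x. x \<notin> K \<Longrightarrow> matnorm a x * \<phi> x \<le> \<Phi> (norm x)"
    and K_sub: "K \<subseteq> ball 0 \<rho>" and rho: "0 \<le> \<rho>" and al: "\<rho>\<^sup>2 < \<alpha>"
    and Cu: "C0inf (\<lambda>x::real^'n. G (x \<bullet> x))"
    and G': "\<And>s. (G has_real_derivative G' s) (at s)" and G'c: "continuous_on UNIV G'"
    and G'0: "\<And>s. s \<notin> {\<alpha>..\<beta>} \<Longrightarrow> G' s = 0"
  shows "Eform a \<phi> (\<lambda>x. G (x \<bullet> x)) (\<lambda>x. G (x \<bullet> x)) \<le>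
    integral\<^sup>L lebesgue (\<lambda>x::real^'n. indicator {x. \<alpha> \<le> x \<bullet> x \<and> x \<bullet> x \<le> \<beta>} x * \<Phi> (norm x) * (4 * (G' (x \<bullet> x))\<^sup>2 * (x \<bullet> x)))"
proof -
  define u where "u = (\<lambda>x::real^'n. G (x \<bullet> x))"
  define v where "v = (\<lambda>(x::real^'n) i. 2 * x $ i * G' (x \<bullet> x))"
  define A where "A = {x::real^'n. \<alpha> \<le> x \<bullet> x \<and> x \<bullet> x \<le> \<beta>}"
  have pdu: "pd i u = (\<lambda>x. v x i)" for i
    unfolding u_def v_def by (rule ext) (rule pd_comp_q, rule G')
  have vc: "continuous_on UNIV (\<lambda>x. v x i)" for i
    unfolding v_def using G'c
    by (auto intro!: continuous_intros continuous_on_compose2[OF G'c])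
  have vm[measurable]: "(\<lambda>x. v x i) \<in> borel_measurable lebesgue" for i
    by (rule cont_meas_leb[OF vc])
  have am[measurable]: "a i j \<in> borel_measurable lebesgue" for i j by (rule a_meas)
  have pm[measurable]: "\<phi> \<in> borel_measurable lebesgue" by (rule phi_meas)
  define Q where "Q = (\<lambda>x. \<Sum>i\<in>UNIV. \<Sum>j\<in>UNIV. a i j x * v x i * v x j)"
  have Qm[measurable]: "Q \<in> borel_measurable lebesgue" unfolding Q_def by measurable
  have intij: "integrable (wmeasure \<phi>) (\<lambda>x. a i j x * v x i * v x j)" for i j
  proof -
    have "integrable (wmeasure \<phi>) (\<lambda>x. a i j x * pd i u x * pd j u x)"
      using wd Cu[folded u_def] unfolding form_well_defined_def by blast
    then show ?thesis unfolding pdu .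
  qed
  have "Eform a \<phi> u u = (\<Sum>i\<in>UNIV. \<Sum>j\<in>UNIV. integral\<^sup>L (wmeasure \<phi>) (\<lambda>x. a i j x * v x i * v x j))"
    unfolding Eform_def pdu ..
  also have "\<dots> = integral\<^sup>L (wmeasure \<phi>) Q"
    unfolding Q_def using intij by (simp add: integral_sum integrable_sum)
  finally have E1: "Eform a \<phi> u u = integral\<^sup>L (wmeasure \<phi>) Q" .
  have intQ: "integrable (wmeasure \<phi>) Q" unfolding Q_def using intij by (simp add: integrable_sum)
  have phinn: "AE x in lebesgue. 0 \<le> \<phi> x" using phi_pos by eventually_elim auto
  have E2: "integral\<^sup>L (wmeasure \<phi>) Q = integral\<^sup>L lebesgue (\<lambda>x. \<phi> x * Q x)"
    unfolding wmeasure_def using phinn by (subst integral_density) auto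
  have int1: "integrable lebesgue (\<lambda>x. \<phi> x * Q x)"
    using intQ unfolding wmeasure_def using phinn by (subst (asm) integrable_density) auto
  define H where "H = (\<lambda>x. indicator A x * \<Phi> (norm x) * (4 * (G' (x \<bullet> x))\<^sup>2 * (x \<bullet> x)))"
  have AK: "A \<subseteq> - K"
  proof
    fix x assume "x \<in> A"
    then have "\<rho>\<^sup>2 < norm x ^ 2" using al by (auto simp: A_def power2_norm_eq_inner)
    then have "\<rho> < norm x" using rho by (meson norm_ge_zero power_less_imp_less_base)
    then show "x \<in> - K" using K_sub by (auto simp: dist_norm)
  qed
  have Acomp: "compact A"
  proof -
    have "A = {x. \<alpha> \<le> x \<bullet> x} \<inter> {x. x \<bullet> x \<le> \<beta>}" unfolding A_def by auto
    moreover have "closed {x::real^'n. \<alpha> \<le> x \<bullet> x}" "closed {x::real^'n. x \<bullet> x \<le> \<beta>}"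
      by (intro closed_Collect_le continuous_intros)+
    moreover have "bounded {x::real^'n. x \<bullet> x \<le> \<beta>}"
    proof -
      have "{x::real^'n. x \<bullet> x \<le> \<beta>} \<subseteq> cball 0 (sqrt \<beta>)"
        by (auto simp: dist_norm power2_norm_eq_inner[symmetric] intro: real_le_rsqrt)
      then show ?thesis using bounded_cball bounded_subset by blast
    qed
    ultimately show ?thesis
      by (simp add: compact_eq_bounded_closed bounded_Int closed_Int)
  qed
  have Phi_int: "set_integrable lebesgue A (\<lambda>x. \<Phi> (norm x))" by (rule Phi_loc[OF Acomp AK])
  have hc: "continuous_on A (\<lambda>x::real^'n. 4 * (G' (x \<bullet> x))\<^sup>2 * (x \<bullet> x))"
    by (auto intro!: continuous_intros continuous_on_compose2[OF G'c])
  obtain B where B: "\<And>x. x \<in> A \<Longrightarrow> norm (4 * (G' (x \<bullet> x))\<^sup>2 * (x \<bullet> x)) \<le> B"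
    using compact_imp_bounded[OF compact_continuous_image[OF hc Acomp]]
    unfolding bounded_iff by auto
  have hm[measurable]: "(\<lambda>x::real^'n. 4 * (G' (x \<bullet> x))\<^sup>2 * (x \<bullet> x)) \<in> borel_measurable lebesgue"
    by (rule cont_meas_leb) (auto intro!: continuous_intros continuous_on_compose2[OF G'c])
  have Am[measurable]: "A \<in> sets lebesgue" using Acomp by (simp add: compact_imp_closed)
  have IPm: "(\<lambda>x. indicator A x * \<Phi> (norm x)) \<in> borel_measurable lebesgue"
    using Phi_int unfolding set_integrable_def by (auto dest: borel_measurable_integrable simp: mult.commute)
  have int2: "integrable lebesgue H"
  proof (rule Bochner_Integration.integrable_bound)
    show "integrable lebesgue (\<lambda>x. B * (indicator A x * \<Phi> (norm x)))"
      using Phi_int unfolding set_integrable_def by (auto simp: mult.commute)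
    show "H \<in> borel_measurable lebesgue" unfolding H_def using IPm by measurable
    show "AE x in lebesgue. norm (H x) \<le> norm (B * (indicator A x * \<Phi> (norm x)))"
    proof (rule AE_I2)
      fix x show "norm (H x) \<le> norm (B * (indicator A x * \<Phi> (norm x)))"
      proof (cases "x \<in> A")
        case True
        have "norm (H x) = \<bar>\<Phi> (norm x)\<bar> * norm (4 * (G' (x \<bullet> x))\<^sup>2 * (x \<bullet> x))"
          using True by (simp add: H_def abs_mult)
        also have "\<dots> \<le> \<bar>\<Phi> (norm x)\<bar> * B" using B[OF True] by (intro mult_left_mono) auto
        also have "\<dots> \<le> norm (B * (indicator A x * \<Phi> (norm x)))" using True
          by (simp add: abs_mult mult.commute mult_right_mono)
        finally show ?thesis .
      qed (simp add: H_def)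
    qed
  qed
  have ptw: "AE x in lebesgue. \<phi> x * Q x \<le> H x"
    using phi_pos
  proof eventually_elim
    fix x assume px: "0 < \<phi> x"
    show "\<phi> x * Q x \<le> H x"
    proof (cases "x \<in> A")
      case True
      have xK: "x \<notin> K" using AK True by auto
      have sv: "(\<Sum>i\<in>UNIV. (v x i)\<^sup>2) = 4 * (G' (x \<bullet> x))\<^sup>2 * (x \<bullet> x)"
        by (simp add: v_def power_mult_distrib inner_vec_def sum_distrib_left sum_distrib_right power2_eq_square mult_ac)
      have "Q x \<le> matnorm a x * (\<Sum>i\<in>UNIV. (v x i)\<^sup>2)"
        unfolding Q_def matnorm_def by (rule CS_quadform)
      then have "\<phi> x * Q x \<le> \<phi> x * (matnorm a x * (\<Sum>i\<in>UNIV. (v x i)\<^sup>2))"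
        using px by (intro mult_left_mono) auto
      also have "\<dots> = (matnorm a x * \<phi> x) * (\<Sum>i\<in>UNIV. (v x i)\<^sup>2)" by simp
      also have "\<dots> \<le> \<Phi> (norm x) * (\<Sum>i\<in>UNIV. (v x i)\<^sup>2)"
        using bound[OF xK] by (intro mult_right_mono) (auto intro: sum_nonneg)
      also have "\<dots> = H x" using True by (simp add: H_def sv)
      finally show ?thesis .
    next
      case False
      then have "G' (x \<bullet> x) = 0" using G'0 unfolding A_def by auto
      then show ?thesis using False by (simp add: Q_def v_def H_def)
    qed
  qed
  have "Eform a \<phi> u u \<le> integral\<^sup>L lebesgue H"
    unfolding E1 E2 by (rule integral_mono_AE[OF int1 int2 ptw])
  then show ?thesis unfolding u_def H_def A_def by simp
qed

definition chi :: "real \<Rightarrow> real \<Rightarrow> real \<Rightarrow> real" where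
  "chi a b s = E0 (s - a) * E0 (b - s)"

lemma smooth1_chi: "smooth1 (chi a b)"
proof -
  have 1: "smooth1 (\<lambda>s. E0 (1 * s + (- a)))" by (rule smooth1_affine[OF smooth1_E0])
  have 2: "smooth1 (\<lambda>s. E0 ((-1) * s + b))" by (rule smooth1_affine[OF smooth1_E0])
  have "smooth1 (\<lambda>s. E0 (1 * s + (- a)) * E0 ((-1) * s + b))" by (rule smooth1_mult[OF 1 2])
  then show ?thesis unfolding chi_def by (simp add: fun_eq_iff)
qed

lemma chi_props:
  shows "chi a b s \<ge> 0" "chi a b s \<le> 1" "s \<le> a \<Longrightarrow> chi a b s = 0" "s \<ge> b \<Longrightarrow> chi a b s = 0"
    "a < s \<Longrightarrow> s < b \<Longrightarrow> chi a b s > 0"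
  unfolding chi_def
  using E0_nonneg[of "s-a"] E0_nonneg[of "b-s"] E0_le1[of "s-a"] E0_le1[of "b-s"]
  by (auto simp: E0_zero E0_pos mult_le_one)

lemma chi_lower:
  assumes "a' \<le> s" "s \<le> b'" shows "chi a b s \<ge> E0 (a' - a) * E0 (b - b')"
  unfolding chi_def
  by (intro mult_mono E0_mono E0_nonneg) (use assms in auto)

lemma approx1D:
  fixes t :: "real \<Rightarrow> real"
  assumes tm: "t \<in> borel_measurable lebesgue" and t0: "\<And>s. 0 \<le> t s" and tM: "\<And>s. t s \<le> M"
    and tsupp: "\<And>s. s \<notin> {a'..b'} \<Longrightarrow> t s = 0"
    and aa: "a < a'" "a' \<le> b'" "b' < b"
  obtains \<psi> :: "nat \<Rightarrow> real \<Rightarrow> real" and N and B where "N \<in> null_sets lebesgue"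
    "\<And>k. smooth1 (\<psi> k)" "\<And>k s. 0 \<le> \<psi> k s" "\<And>k s. \<psi> k s \<le> B"
    "\<And>k s. s \<le> a \<Longrightarrow> \<psi> k s = 0" "\<And>k s. s \<ge> b \<Longrightarrow> \<psi> k s = 0"
    "\<And>s. s \<notin> N \<Longrightarrow> (\<lambda>k. \<psi> k s) \<longlonglongrightarrow> t s"
proof -
  define ch where "ch = chi a b"
  define ch0 where "ch0 = E0 (a' - a) * E0 (b - b')"
  have ch0: "ch0 > 0" unfolding ch0_def using aa by (auto intro!: mult_pos_pos E0_pos)
  have chlow: "s \<in> {a'..b'} \<Longrightarrow> ch s \<ge> ch0" for s unfolding ch_def ch0_def by (auto intro: chi_lower)
  have chc: "continuous_on UNIV ch" unfolding ch_def by (rule smooth1_continuous[OF smooth1_chi])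
  define \<theta> where "\<theta> = (\<lambda>s. sqrt (t s / ch s))"
  define B\<theta> where "B\<theta> = sqrt (M / ch0)"
  have \<theta>0: "0 \<le> \<theta> s" for s unfolding \<theta>_def using t0 chi_props(1)[of a b s]
    by (auto simp: ch_def)
  have \<theta>B: "\<theta> s \<le> B\<theta>" for s
  proof (cases "s \<in> {a'..b'}")
    case True
    have "t s / ch s \<le> M / ch0"
      using chlow[OF True] ch0 t0[of s] tM[of s] by (intro frac_le) auto
    then show ?thesis unfolding \<theta>_def B\<theta>_def by simp
  next
    case False
    have "0 \<le> M" using t0 tM order.trans by blast
    then show ?thesis using False tsupp unfolding \<theta>_def B\<theta>_def using ch0 by simp
  qed
  have chm: "ch \<in> borel_measurable lebesgue"
    by (rule measurable_completion) (simp add: borel_measurable_continuous_onI chc)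
  have \<theta>m: "\<theta> \<in> borel_measurable lebesgue" unfolding \<theta>_def using tm chm by measurable
  have "\<theta> measurable_on UNIV"
    by (rule lebesgue_measurable_imp_measurable_on[OF \<theta>m]) simp
  then obtain Nn g where Nn: "negligible Nn" and gc: "\<And>n. continuous_on UNIV (g n)"
    and gl: "\<And>s. s \<notin> Nn \<Longrightarrow> (\<lambda>n. g n s) \<longlonglongrightarrow> \<theta> s"
    unfolding measurable_on_def by auto
  define h where "h = (\<lambda>n s. max 0 (min B\<theta> (g n s)))"
  have hc: "continuous_on {a..b} (h n)" for n
    unfolding h_def by (intro continuous_intros continuous_on_subset[OF gc]) auto
  have hB: "0 \<le> h n s" "h n s \<le> B\<theta>" for n s unfolding h_def using \<theta>0[of s] \<theta>B[of s] by auto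
  have hl: "s \<notin> Nn \<Longrightarrow> (\<lambda>n. h n s) \<longlonglongrightarrow> \<theta> s" for s
  proof -
    assume "s \<notin> Nn"
    then have "(\<lambda>n. h n s) \<longlonglongrightarrow> max 0 (min B\<theta> (\<theta> s))"
      unfolding h_def by (intro tendsto_max tendsto_min tendsto_const gl)
    also have "max 0 (min B\<theta> (\<theta> s)) = \<theta> s" using \<theta>0[of s] \<theta>B[of s] by simp
    finally show ?thesis .
  qed
  have "\<forall>n. \<exists>p. real_polynomial_function p \<and> (\<forall>s\<in>{a..b}. \<bar>h n s - p s\<bar> < 1 / (real n + 1))"
  proof
    fix n
    obtain p where "real_polynomial_function p" "\<And>s. s \<in> {a..b} \<Longrightarrow> \<bar>h n s - p s\<bar> < 1 / (real n + 1)"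
      using Stone_Weierstrass_real_polynomial_function[OF compact_Icc hc, of "1 / (real n + 1)"] by auto
    then show "\<exists>p. real_polynomial_function p \<and> (\<forall>s\<in>{a..b}. \<bar>h n s - p s\<bar> < 1 / (real n + 1))" by blast
  qed
  then obtain P where P: "\<And>n. real_polynomial_function (P n)"
    "\<And>n s. s \<in> {a..b} \<Longrightarrow> \<bar>h n s - P n s\<bar> < 1 / (real n + 1)" by metis
  define \<psi> where "\<psi> = (\<lambda>n s. ch s * (P n s)\<^sup>2)"
  show ?thesis
  proof
    show "Nn \<in> null_sets lebesgue" using Nn by (simp add: negligible_iff_null_sets)
    show "smooth1 (\<psi> k)" for k
      unfolding \<psi>_def power2_eq_square ch_def
      by (intro smooth1_mult smooth1_chi smooth1_poly P)
    show "0 \<le> \<psi> k s" for k s unfolding \<psi>_def ch_def using chi_props(1) by auto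
    show "\<psi> k s \<le> (B\<theta> + 1)\<^sup>2" for k s
    proof (cases "s \<in> {a..b}")
      case True
      have "1 / (real k + 1) \<le> 1" by (simp add: divide_le_eq)
      then have "\<bar>h k s - P k s\<bar> < 1" using P(2)[OF True, of k] by linarith
      then have "\<bar>P k s\<bar> \<le> \<bar>h k s\<bar> + 1" by linarith
      also have "\<dots> \<le> B\<theta> + 1" using hB[of k s] by auto
      finally have "(P k s)\<^sup>2 \<le> (B\<theta> + 1)\<^sup>2"
        by (metis abs_ge_zero power2_abs power_mono)
      have "chi a b s * (P k s)\<^sup>2 \<le> 1 * (B\<theta> + 1)\<^sup>2"
        by (rule mult_mono) (use chi_props(1,2)[of a b s] \<open>(P k s)\<^sup>2 \<le> (B\<theta> + 1)\<^sup>2\<close> in auto)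
      then show ?thesis unfolding \<psi>_def ch_def by simp
    next
      case False
      then have "s \<le> a \<or> b \<le> s" by auto
      then have "ch s = 0" unfolding ch_def using chi_props(3)[of s a b] chi_props(4)[of b s a] by blast
      then show ?thesis unfolding \<psi>_def by simp
    qed
    show "\<psi> k s = 0" if "s \<le> a" for k s unfolding \<psi>_def ch_def using chi_props(3)[OF that] by simp
    show "\<psi> k s = 0" if "s \<ge> b" for k s unfolding \<psi>_def ch_def using chi_props(4)[OF that] by simp
    show "(\<lambda>k. \<psi> k s) \<longlonglongrightarrow> t s" if sN: "s \<notin> Nn" for s
    proof (cases "a < s \<and> s < b")
      case True
      have "(\<lambda>k. P k s - h k s) \<longlonglongrightarrow> 0"
      proof (rule Lim_null_comparison[where g="\<lambda>k. 1 / (real k + 1)"])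
        show "\<forall>\<^sub>F k in sequentially. norm (P k s - h k s) \<le> 1 / (real k + 1)"
          using P(2)[of s] True by (auto intro!: always_eventually less_imp_le simp: abs_minus_commute)
        show "(\<lambda>k. 1 / (real k + 1)) \<longlonglongrightarrow> 0" using LIMSEQ_inverse_real_of_nat by (simp add: inverse_eq_divide add.commute)
      qed
      then have "(\<lambda>k. (P k s - h k s) + h k s) \<longlonglongrightarrow> 0 + \<theta> s"
        by (intro tendsto_add hl sN)
      then have "(\<lambda>k. P k s) \<longlonglongrightarrow> \<theta> s" by simp
      then have "(\<lambda>k. \<psi> k s) \<longlonglongrightarrow> ch s * (\<theta> s)\<^sup>2"
        unfolding \<psi>_def by (intro tendsto_intros)
      moreover have "ch s * (\<theta> s)\<^sup>2 = t s"
      proof -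
        have "ch s > 0" unfolding ch_def using chi_props(5) True by auto
        then show ?thesis unfolding \<theta>_def using t0[of s] by simp
      qed
      ultimately show ?thesis by simp
    next
      case False
      then have "s \<le> a \<or> b \<le> s" by auto
      then have "ch s = 0" unfolding ch_def using chi_props(3)[of s a b] chi_props(4)[of b s a] by blast
      then have "\<psi> k s = 0" for k unfolding \<psi>_def by simp
      moreover have "t s = 0" using False aa tsupp by auto
      ultimately show ?thesis by simp
    qed
  qed
qed

definition wfn :: "nat \<Rightarrow> real \<Rightarrow> real" where
  "wfn d r = 2 / (real d * unit_ball_vol (real d) * r ^ (d - 2))"

lemma wfn_pos: "d \<ge> 1 \<Longrightarrow> r > 0 \<Longrightarrow> wfn d r > 0"
  unfolding wfn_def by (auto intro!: divide_pos_pos mult_pos_pos)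

lemma pdens_wfn: "d \<ge> 2 \<Longrightarrow> r > 0 \<Longrightarrow> pdens d r * wfn d r = 2 * r"
proof -
  assume d: "d \<ge> 2" and r: "r > 0"
  have V: "unit_ball_vol (real d) > 0" by simp
  have "r ^ (d - 1) = r * r ^ (d - 2)" using d by (metis Suc_diff_Suc Suc_1 diff_Suc_1 less_le_trans lessI power_Suc)
  moreover have "unit_ball_vol (real d) \<noteq> 0" using V by (metis order_less_irrefl)
  ultimately show ?thesis using d r unfolding pdens_def wfn_def by (simp add: field_simps)
qed

lemma int_identity:
  fixes \<psi> :: "real \<Rightarrow> real"
  assumes d: "DIM('a::euclidean_space) \<ge> 2"
    and \<psi>c: "continuous_on UNIV \<psi>" and \<psi>0: "\<And>s. 0 \<le> \<psi> s"
    and \<psi>z: "\<And>s. s \<le> a \<Longrightarrow> \<psi> s = 0" "\<And>s. s \<ge> b \<Longrightarrow> \<psi> s = 0" and a: "0 < a" "a \<le> b"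
  shows "(\<integral>\<^sup>+ s. ennreal (\<psi> s) \<partial>lborel) = (\<integral>\<^sup>+ x. ennreal (wfn DIM('a) (norm (x::'a)) * \<psi> (x \<bullet> x)) \<partial>lborel)"
proof -
  have \<psi>m[measurable]: "\<psi> \<in> borel_measurable borel" by (rule borel_measurable_continuous_onI[OF \<psi>c])
  have wm[measurable]: "wfn d \<in> borel_measurable borel" for d unfolding wfn_def by measurable
  have "(\<integral>\<^sup>+ x. ennreal (wfn DIM('a) (norm (x::'a)) * \<psi> (x \<bullet> x)) \<partial>lborel)
      = (\<integral>\<^sup>+ x. ennreal (wfn DIM('a) (norm (x::'a)) * \<psi> ((norm x)\<^sup>2)) \<partial>lborel)"
    by (simp add: power2_norm_eq_inner)
  also have "\<dots> = (\<integral>\<^sup>+ r. ennreal (pdens DIM('a) r) * ennreal (wfn DIM('a) r * \<psi> (r\<^sup>2)) \<partial>lborel)"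
    by (rule polar_nn[where h="\<lambda>r. ennreal (wfn DIM('a) r * \<psi> (r\<^sup>2))"]) (use d in auto)
  also have "\<dots> = (\<integral>\<^sup>+ r. ennreal (\<psi> (r\<^sup>2) * (2 * r) * indicator {0..sqrt b} r) \<partial>lborel)"
  proof (rule nn_integral_cong)
    fix r :: real
    show "ennreal (pdens DIM('a) r) * ennreal (wfn DIM('a) r * \<psi> (r\<^sup>2)) = ennreal (\<psi> (r\<^sup>2) * (2 * r) * indicator {0..sqrt b} r)"
    proof (cases "r > 0")
      case True
      have "ennreal (pdens DIM('a) r) * ennreal (wfn DIM('a) r * \<psi> (r\<^sup>2)) = ennreal (pdens DIM('a) r * wfn DIM('a) r * \<psi> (r\<^sup>2))"
        using pdens_nonneg[of "DIM('a)" r] wfn_pos[of "DIM('a)" r] True d \<psi>0[of "r\<^sup>2"]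
        by (subst ennreal_mult[symmetric]) (auto simp: mult.assoc)
      also have "\<dots> = ennreal (2 * r * \<psi> (r\<^sup>2))" using pdens_wfn[OF d True] by simp
      also have "\<dots> = ennreal (\<psi> (r\<^sup>2) * (2 * r) * indicator {0..sqrt b} r)"
      proof (cases "r \<le> sqrt b")
        case False
        then have "r\<^sup>2 \<ge> b" using True by (metis less_le_not_le nle_le real_sqrt_le_iff real_sqrt_pow2_iff sqrt_le_D)
        then show ?thesis using \<psi>z(2) by (simp add: indicator_def)
      qed (use True in \<open>simp add: indicator_def mult_ac\<close>)
      finally show ?thesis .
    next
      case False
      then have "pdens DIM('a) r = 0 \<or> r = 0" by (auto simp: pdens_def)
      moreover have "\<psi> 0 = 0" using \<psi>z(1) a by auto
      ultimately show ?thesis using False by (auto simp: indicator_def)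
    qed
  qed
  also have "\<dots> = (\<integral>\<^sup>+ s. ennreal (\<psi> s * indicator {0\<^sup>2..(sqrt b)\<^sup>2} s) \<partial>lborel)"
    by (rule nn_integral_substitution[where g="\<lambda>r. r\<^sup>2", symmetric])
       (use a in \<open>auto simp: set_borel_measurable_def intro!: derivative_eq_intros continuous_intros\<close>)
  also have "\<dots> = (\<integral>\<^sup>+ s. ennreal (\<psi> s) \<partial>lborel)"
  proof (rule nn_integral_cong)
    fix s :: real
    have "s \<notin> {0..b} \<Longrightarrow> \<psi> s = 0" using \<psi>z a by (cases "s \<le> a") auto
    then show "ennreal (\<psi> s * indicator {0\<^sup>2..(sqrt b)\<^sup>2} s) = ennreal (\<psi> s)"
      using a by (auto simp: indicator_def)
  qed
  finally show ?thesis by simp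
qed

lemma null_radial:
  fixes N :: "real set"
  assumes d: "DIM('a::euclidean_space) \<ge> 1" and N: "N \<in> null_sets lebesgue" and a: "0 < a" "a \<le> b"
  shows "{x::'a. x \<bullet> x \<in> N \<inter> {a..b}} \<in> null_sets lebesgue"
proof -
  obtain N' where N': "N' \<in> null_sets lborel" "N \<subseteq> N'"
    using N unfolding null_sets_completion_iff2 by auto
  have Db: "N' \<inter> {a..b} \<in> sets borel" using N' by auto
  have "emeasure lborel (N' \<inter> {a..b}) = 0"
    using N' by (metis Int_lower1 emeasure_eq_0 null_setsD1 null_setsD2 sets_lborel)
  then have "emeasure lborel {x::'a. x \<bullet> x \<in> N' \<inter> {a..b}} = 0"
    using null_transfer[OF d Db _ a] by auto
  moreover have "{x::'a. x \<bullet> x \<in> N' \<inter> {a..b}} \<in> sets lborel" using Db by measurable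
  ultimately have "{x::'a. x \<bullet> x \<in> N' \<inter> {a..b}} \<in> null_sets lborel" by (auto simp: null_sets_def)
  then show ?thesis
    unfolding null_sets_completion_iff2 using N'(2) by (intro bexI[of _ "{x::'a. x \<bullet> x \<in> N' \<inter> {a..b}}"]) auto
qed

definition iota :: "(real \<Rightarrow> real) \<Rightarrow> nat \<Rightarrow> 'a::real_normed_vector \<Rightarrow> ennreal" where
  "iota \<Phi> d y = (if \<Phi> (norm y) = 0 then \<infinity> else ennreal (norm y powr (2 - 2 * real d) / \<Phi> (norm y)))"

lemma a_seq_iota:
  "a_seq TYPE('n::finite) \<Phi> \<rho> n = (\<integral>\<^sup>+ y. indicator (cball (0::real^'n) (real n) - ball 0 \<rho>) y * iota \<Phi> CARD('n) y \<partial>lebesgue)"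
  unfolding a_seq_def iota_def ..

lemma iota_meas:
  fixes S :: "(real^'n::finite) set"
  assumes "set_integrable lebesgue S (\<lambda>x. \<Phi> (norm x))" and S: "S \<in> sets lebesgue"
  shows "(\<lambda>y. indicator S y * iota \<Phi> d y) \<in> borel_measurable lebesgue"
proof -
  define P where "P = (\<lambda>y::real^'n. indicator S y * \<Phi> (norm y))"
  have Pm[measurable]: "P \<in> borel_measurable lebesgue"
    using assms unfolding set_integrable_def P_def by (auto dest: borel_measurable_integrable)
  have Sm[measurable]: "S \<in> sets lebesgue" by (rule S)
  have nm[measurable]: "(\<lambda>y::real^'n. norm y powr c) \<in> borel_measurable lebesgue" for c
    by (rule measurable_completion) (intro borel_measurable_continuous_onI continuous_intros | simp)+
  have "(\<lambda>y. indicator S y * iota \<Phi> d y) =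
      (\<lambda>y. indicator S y * (if P y = 0 then \<infinity> else ennreal (norm y powr (2 - 2 * real d) / P y)))"
    by (auto simp: fun_eq_iff iota_def P_def indicator_def)
  also have "\<dots> \<in> borel_measurable lebesgue" by measurable
  finally show ?thesis .
qed

lemma norm_ge_iff_inner: "0 \<le> r \<Longrightarrow> r \<le> norm y \<longleftrightarrow> r\<^sup>2 \<le> y \<bullet> y"
  by (metis abs_norm_cancel norm_ge_zero power2_norm_eq_inner real_le_rsqrt real_sqrt_abs sqrt_le_D abs_of_nonneg order.trans power_mono)

lemma norm_le_iff_inner: "0 \<le> r \<Longrightarrow> norm y \<le> r \<longleftrightarrow> y \<bullet> y \<le> r\<^sup>2"
  by (metis norm_ge_zero power2_norm_eq_inner power_mono real_le_rsqrt real_sqrt_abs abs_of_nonneg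
      norm_eq_sqrt_inner)

lemma compact_shell:
  "compact {y::'a::euclidean_space. \<alpha> \<le> y \<bullet> y \<and> y \<bullet> y \<le> \<beta>}"
proof -
  have "{y::'a. \<alpha> \<le> y \<bullet> y \<and> y \<bullet> y \<le> \<beta>} = {y. \<alpha> \<le> y \<bullet> y} \<inter> {y. y \<bullet> y \<le> \<beta>}" by auto
  moreover have "closed {y::'a. \<alpha> \<le> y \<bullet> y}" "closed {y::'a. y \<bullet> y \<le> \<beta>}"
    by (intro closed_Collect_le continuous_intros)+
  moreover have "bounded {y::'a. y \<bullet> y \<le> \<beta>}"
  proof -
    have "{y::'a. y \<bullet> y \<le> \<beta>} \<subseteq> cball 0 (sqrt \<beta>)"
      by (auto simp: dist_norm power2_norm_eq_inner[symmetric] intro: real_le_rsqrt)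
    then show ?thesis using bounded_cball bounded_subset by blast
  qed
  ultimately show ?thesis by (simp add: compact_eq_bounded_closed bounded_Int closed_Int)
qed

lemma choose_annulus:
  fixes \<Phi> :: "real \<Rightarrow> real" and K :: "(real^'n::finite) set" and \<rho> :: real
  assumes Phi_loc: "\<And>S. compact S \<Longrightarrow> S \<subseteq> - K \<Longrightarrow> set_integrable lebesgue S (\<lambda>x. \<Phi> (norm x))"
    and rho_pos: "\<rho> > 0" and K_sub: "K \<subseteq> ball 0 \<rho>"
    and an_fin: "\<And>n. real n > \<rho> \<Longrightarrow> a_seq TYPE('n) \<Phi> \<rho> n < \<infinity>"
    and an_lim: "filterlim (a_seq TYPE('n) \<Phi> \<rho>) (nhds \<infinity>) sequentially"
    and R: "real R > \<rho>"
  shows "\<exists>N::nat. N \<ge> R + 2 \<and> ennreal L \<le> (\<integral>\<^sup>+ y. indicator {y::real^'n. (real R + 1)\<^sup>2 \<le> y \<bullet> y \<and> y \<bullet> y \<le> (real N)\<^sup>2} y * iota \<Phi> CARD('n) y \<partial>lebesgue)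
     \<and> (\<integral>\<^sup>+ y. indicator {y::real^'n. (real R + 1)\<^sup>2 \<le> y \<bullet> y \<and> y \<bullet> y \<le> (real N)\<^sup>2} y * iota \<Phi> CARD('n) y \<partial>lebesgue) < \<infinity>"
proof -
  define S where "S = (\<lambda>n::nat. cball (0::real^'n) (real n) - ball 0 \<rho>)"
  define A where "A = (\<lambda>N::nat. {y::real^'n. (real R + 1)\<^sup>2 \<le> y \<bullet> y \<and> y \<bullet> y \<le> (real N)\<^sup>2})"
  define I where "I = (\<lambda>N. (\<integral>\<^sup>+ y. indicator (A N) y * iota \<Phi> CARD('n) y \<partial>lebesgue))"
  have a_eq: "a_seq TYPE('n) \<Phi> \<rho> n = (\<integral>\<^sup>+ y. indicator (S n) y * iota \<Phi> CARD('n) y \<partial>lebesgue)" for n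
    unfolding a_seq_iota S_def ..
  have Sc: "compact (S n)" for n unfolding S_def by (intro compact_diff) auto
  have SK: "S n \<subseteq> - K" for n using K_sub unfolding S_def by auto
  have Ac: "compact (A N)" for N unfolding A_def by (rule compact_shell)
  have AK: "A N \<subseteq> - K" for N
  proof
    fix y assume "y \<in> A N"
    then have "real R + 1 \<le> norm y" unfolding A_def by (subst norm_ge_iff_inner) auto
    then show "y \<in> - K" using K_sub R by (auto simp: dist_norm)
  qed
  have Sm: "(\<lambda>y. indicator (S n) y * iota \<Phi> CARD('n) y) \<in> borel_measurable lebesgue" for n
    by (rule iota_meas[OF Phi_loc[OF Sc SK]]) (use Sc in \<open>simp add: compact_imp_closed\<close>)
  have Am: "(\<lambda>y. indicator (A n) y * iota \<Phi> CARD('n) y) \<in> borel_measurable lebesgue" for n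
    by (rule iota_meas[OF Phi_loc[OF Ac AK]]) (use Ac in \<open>simp add: compact_imp_closed\<close>)
  have sub1: "S N \<subseteq> S (R + 1) \<union> A N" for N
  proof
    fix y assume y: "y \<in> S N"
    show "y \<in> S (R + 1) \<union> A N"
    proof (cases "norm y \<le> real R + 1")
      case True then show ?thesis using y unfolding S_def by auto
    next
      case False
      then have "(real R + 1)\<^sup>2 \<le> y \<bullet> y" using norm_ge_iff_inner[of "real R + 1" y] by auto
      moreover have "y \<bullet> y \<le> (real N)\<^sup>2" using y norm_le_iff_inner[of "real N" y] unfolding S_def by auto
      ultimately show ?thesis unfolding A_def by auto
    qed
  qed
  have le1: "a_seq TYPE('n) \<Phi> \<rho> N \<le> a_seq TYPE('n) \<Phi> \<rho> (R + 1) + I N" for N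
  proof -
    have "a_seq TYPE('n) \<Phi> \<rho> N \<le> (\<integral>\<^sup>+ y. indicator (S (R+1)) y * iota \<Phi> CARD('n) y + indicator (A N) y * iota \<Phi> CARD('n) y \<partial>lebesgue)"
      unfolding a_eq
    proof (rule nn_integral_mono)
      fix y show "indicator (S N) y * iota \<Phi> CARD('n) y \<le> indicator (S (R+1)) y * iota \<Phi> CARD('n) y + indicator (A N) y * iota \<Phi> CARD('n) y"
        using sub1[of N] by (auto simp: indicator_def)
    qed
    also have "\<dots> = a_seq TYPE('n) \<Phi> \<rho> (R + 1) + I N"
      unfolding a_eq I_def by (rule nn_integral_add[OF Sm Am])
    finally show ?thesis .
  qed
  have fin1: "a_seq TYPE('n) \<Phi> \<rho> (R + 1) < \<infinity>" by (rule an_fin) (use R in auto)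
  define c where "c = a_seq TYPE('n) \<Phi> \<rho> (R + 1) + ennreal L"
  have "c < \<infinity>" unfolding c_def using fin1 by (simp add: less_top)
  then have "eventually (\<lambda>n. c < a_seq TYPE('n) \<Phi> \<rho> n) sequentially"
    using an_lim by (rule order_tendstoD(1)[rotated])
  moreover have "eventually (\<lambda>n. n \<ge> R + 2) sequentially" by (rule eventually_ge_at_top)
  ultimately obtain N where N: "c < a_seq TYPE('n) \<Phi> \<rho> N" "N \<ge> R + 2"
    by (metis (mono_tags, lifting) eventually_at_top_linorder eventually_conj_iff order_refl)
  have LI: "ennreal L \<le> I N"
  proof (rule ccontr)
    assume "\<not> ennreal L \<le> I N"
    then have "I N \<le> ennreal L" by simp
    then have "a_seq TYPE('n) \<Phi> \<rho> (R + 1) + I N \<le> c" unfolding c_def by (rule add_left_mono)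
    then show False using le1[of N] N(1) by simp
  qed
  have "A N \<subseteq> S N"
  proof
    fix y assume "y \<in> A N"
    then have "real R + 1 \<le> norm y" "norm y \<le> real N" unfolding A_def
      using norm_ge_iff_inner[of "real R + 1" y] norm_le_iff_inner[of "real N" y] by auto
    then show "y \<in> S N" using R unfolding S_def by (auto simp: dist_norm)
  qed
  then have "I N \<le> a_seq TYPE('n) \<Phi> \<rho> N"
    unfolding I_def a_eq by (intro nn_integral_mono) (auto simp: indicator_def)
  also have "\<dots> < \<infinity>" by (rule an_fin) (use R N(2) in auto)
  finally show ?thesis using LI N(2) unfolding I_def A_def by blast
qed

lemma build_u:
  fixes a :: "'n::finite \<Rightarrow> 'n \<Rightarrow> real^'n \<Rightarrow> real" and \<phi> :: "real^'n \<Rightarrow> real"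
    and \<Phi> :: "real \<Rightarrow> real" and K :: "(real^'n) set" and \<psi> :: "real \<Rightarrow> real"
  assumes phi_meas: "\<phi> \<in> borel_measurable lebesgue"
    and phi_pos: "AE x in lebesgue. \<phi> x > 0"
    and a_meas: "\<And>i j. a i j \<in> borel_measurable lebesgue"
    and wd: "form_well_defined a \<phi>"
    and Phi_loc: "\<And>S. compact S \<Longrightarrow> S \<subseteq> - K \<Longrightarrow> set_integrable lebesgue S (\<lambda>x. \<Phi> (norm x))"
    and bound: "\<And>x. x \<notin> K \<Longrightarrow> matnorm a x * \<phi> x \<le> \<Phi> (norm x)"
    and K_sub: "K \<subseteq> ball 0 \<rho>" and rho: "0 \<le> \<rho>" and al: "\<rho>\<^sup>2 < \<alpha>" and ab: "\<alpha> \<le> \<beta>"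
    and \<psi>s: "smooth1 \<psi>" and \<psi>0: "\<And>s. 0 \<le> \<psi> s"
    and \<psi>z: "\<And>s. s \<le> \<alpha> \<Longrightarrow> \<psi> s = 0" "\<And>s. s \<ge> \<beta> \<Longrightarrow> \<psi> s = 0"
    and cpos: "integral {\<alpha>-1..\<beta>} \<psi> > 0"
  defines "c \<equiv> integral {\<alpha>-1..\<beta>} \<psi>"
  defines "u \<equiv> (\<lambda>x::real^'n. 1 - integral {\<alpha>-1..x \<bullet> x} \<psi> / c)"
  shows "C0inf u" "\<And>x. 0 \<le> u x" "\<And>x. u x \<le> 1" "\<And>x. x \<bullet> x \<le> \<alpha> \<Longrightarrow> u x = 1"
    "\<And>x. x \<bullet> x \<ge> \<beta> \<Longrightarrow> u x = 0"
    "Eform a \<phi> u u \<le> 4 / c\<^sup>2 * integral\<^sup>L lebesgue (\<lambda>x::real^'n. indicator {x. \<alpha> \<le> x \<bullet> x \<and> x \<bullet> x \<le> \<beta>} x * \<Phi> (norm x) * ((\<psi> (x \<bullet> x))\<^sup>2 * (x \<bullet> x)))"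
proof -
  define \<Psi> where "\<Psi> = (\<lambda>s. integral {\<alpha>-1..s} \<psi>)"
  have \<psi>c: "continuous_on UNIV \<psi>" by (rule smooth1_continuous[OF \<psi>s])
  have \<Psi>d: "(\<Psi> has_real_derivative \<psi> s) (at s)" for s
    unfolding \<Psi>_def by (rule antideriv_deriv[OF \<psi>c \<psi>z(1)])
  have \<Psi>s: "smooth1 \<Psi>" unfolding \<Psi>_def by (rule smooth1_antideriv[OF \<psi>s \<psi>z(1)])
  have c: "c > 0" using cpos c_def by simp
  have \<Psi>low: "\<Psi> s = 0" if "s \<le> \<alpha>" for s
  proof -
    have "integral {\<alpha>-1..s} \<psi> = integral {\<alpha>-1..s} (\<lambda>_. 0::real)"
      by (intro integral_cong) (use that in \<open>auto intro!: \<psi>z(1)\<close>)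
    then show ?thesis unfolding \<Psi>_def by simp
  qed
  have \<Psi>high: "\<Psi> s = c" if "s \<ge> \<beta>" for s
  proof -
    have "\<psi> integrable_on {\<alpha>-1..s}"
      by (rule integrable_continuous_real) (rule continuous_on_subset[OF \<psi>c], auto)
    then have "integral {\<alpha>-1..s} \<psi> = integral {\<alpha>-1..\<beta>} \<psi> + integral {\<beta>..s} \<psi>"
      using Henstock_Kurzweil_Integration.integral_combine[of "\<alpha>-1" \<beta> s \<psi>] ab that by simp
    moreover have "integral {\<beta>..s} \<psi> = integral {\<beta>..s} (\<lambda>_. 0::real)"
      by (intro integral_cong) (auto intro!: \<psi>z(2))
    ultimately show ?thesis unfolding \<Psi>_def c_def by simp
  qed
  have \<Psi>mono: "\<Psi> x \<le> \<Psi> y" if "x \<le> y" for x y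
  proof (rule DERIV_nonneg_imp_nondecreasing[of x y \<Psi>, OF that])
    fix z show "\<exists>y. (\<Psi> has_real_derivative y) (at z) \<and> 0 \<le> y" using \<Psi>d[of z] \<psi>0[of z] by blast
  qed
  have \<Psi>rng: "0 \<le> \<Psi> s \<and> \<Psi> s \<le> c" for s
  proof -
    have "\<Psi> (min s \<alpha>) \<le> \<Psi> s" "\<Psi> s \<le> \<Psi> (max s \<beta>)" by (auto intro: \<Psi>mono)
    then show ?thesis using \<Psi>low[of "min s \<alpha>"] \<Psi>high[of "max s \<beta>"] by auto
  qed
  define G where "G = (\<lambda>s. 1 + (- 1 / c) * \<Psi> s)"
  have uG: "u = (\<lambda>x. G (x \<bullet> x))" unfolding u_def G_def \<Psi>_def by (auto simp: fun_eq_iff)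
  have Gs: "smooth1 G" unfolding G_def
    by (intro smooth1_add smooth1_const smooth1_cmult \<Psi>s)
  have Gd: "(G has_real_derivative (- \<psi> s / c)) (at s)" for s
    unfolding G_def using \<Psi>d[of s] c by (auto intro!: derivative_eq_intros)
  show "0 \<le> u x" for x using \<Psi>rng[of "x \<bullet> x"] c by (simp add: uG G_def field_simps)
  show "u x \<le> 1" for x using \<Psi>rng[of "x \<bullet> x"] c by (simp add: uG G_def field_simps)
  show "x \<bullet> x \<le> \<alpha> \<Longrightarrow> u x = 1" for x using \<Psi>low by (simp add: uG G_def)
  show u0: "x \<bullet> x \<ge> \<beta> \<Longrightarrow> u x = 0" for x using \<Psi>high c by (simp add: uG G_def)
  show Cu: "C0inf u"
    unfolding C0inf_def
  proof
    show "smooth_fun u" unfolding uG by (rule smooth_fun_comp_q[OF Gs])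
    have "{x. u x \<noteq> 0} \<subseteq> cball 0 (sqrt \<beta>)"
    proof
      fix x assume "x \<in> {x. u x \<noteq> 0}"
      then have "x \<bullet> x < \<beta>" using u0 by force
      then show "x \<in> cball 0 (sqrt \<beta>)"
        by (auto simp: dist_norm norm_eq_sqrt_inner intro: real_sqrt_le_mono)
    qed
    then show "compact (closure {x. u x \<noteq> 0})"
      using bounded_cball bounded_subset compact_closure by blast
  qed
  have "Eform a \<phi> u u \<le> integral\<^sup>L lebesgue (\<lambda>x::real^'n. indicator {x. \<alpha> \<le> x \<bullet> x \<and> x \<bullet> x \<le> \<beta>} x * \<Phi> (norm x) * (4 * (- \<psi> (x \<bullet> x) / c)\<^sup>2 * (x \<bullet> x)))"
    unfolding uG
  proof (rule energy_bound[OF phi_meas phi_pos a_meas wd Phi_loc bound K_sub rho al])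
    show "C0inf (\<lambda>x::real^'n. G (x \<bullet> x))" using Cu uG by simp
    show "(G has_real_derivative (- \<psi> s / c)) (at s)" for s by (rule Gd)
    show "continuous_on UNIV (\<lambda>s. - \<psi> s / c)" using c by (intro continuous_intros \<psi>c) auto
    show "s \<notin> {\<alpha>..\<beta>} \<Longrightarrow> - \<psi> s / c = 0" for s using \<psi>z by (cases "s \<le> \<alpha>") auto
  qed
  also have "\<dots> = integral\<^sup>L lebesgue (\<lambda>x::real^'n. 4 / c\<^sup>2 * (indicator {x. \<alpha> \<le> x \<bullet> x \<and> x \<bullet> x \<le> \<beta>} x * \<Phi> (norm x) * ((\<psi> (x \<bullet> x))\<^sup>2 * (x \<bullet> x))))"
    by (rule Bochner_Integration.integral_cong) (auto simp: power2_eq_square field_simps)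
  also have "\<dots> = 4 / c\<^sup>2 * integral\<^sup>L lebesgue (\<lambda>x::real^'n. indicator {x. \<alpha> \<le> x \<bullet> x \<and> x \<bullet> x \<le> \<beta>} x * \<Phi> (norm x) * ((\<psi> (x \<bullet> x))\<^sup>2 * (x \<bullet> x)))"
    by (rule integral_mult_right_zero)
  finally show "Eform a \<phi> u u \<le> 4 / c\<^sup>2 * integral\<^sup>L lebesgue (\<lambda>x::real^'n. indicator {x. \<alpha> \<le> x \<bullet> x \<and> x \<bullet> x \<le> \<beta>} x * \<Phi> (norm x) * ((\<psi> (x \<bullet> x))\<^sup>2 * (x \<bullet> x)))" .
qed

lemma iota_alg:
  fixes r P :: real and d :: nat
  assumes r: "r > 0" and P: "P > 0" and d: "d \<ge> 2"
  shows "4 / (real d * unit_ball_vol (real d))\<^sup>2 * (r powr (2 - 2 * real d) / P) = wfn d r * (wfn d r / (P * r\<^sup>2))"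
proof -
  define V where "V = unit_ball_vol (real d)"
  have V: "V > 0" unfolding V_def by simp
  have e: "2 - 2 * real d = - real (2 * d - 2)" using d by (simp add: of_nat_diff)
  have "r powr (2 - 2 * real d) = 1 / r ^ (2 * d - 2)"
    unfolding e using r by (simp add: powr_minus powr_realpow divide_inverse)
  moreover have "r ^ (2 * d - 2) = (r ^ (d - 2))\<^sup>2 * r\<^sup>2"
  proof -
    have "2 * d - 2 = 2 * (d - 2) + 2" using d by simp
    then have "r ^ (2 * d - 2) = r ^ (2 * (d - 2)) * r\<^sup>2" by (metis power_add)
    also have "r ^ (2 * (d - 2)) = (r ^ (d - 2))\<^sup>2" by (rule power_even_eq)
    finally show ?thesis .
  qed
  ultimately show ?thesis using r P V d unfolding wfn_def V_def[symmetric]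
    by (simp add: field_simps power2_eq_square)
qed

lemma wfn_mono: "d \<ge> 2 \<Longrightarrow> 0 < r \<Longrightarrow> r \<le> r' \<Longrightarrow> wfn d r' \<le> wfn d r"
  unfolding wfn_def
  by (intro divide_left_mono mult_left_mono power_mono mult_pos_pos) auto

lemma wfn_nonneg: "wfn d r \<ge> 0 \<or> r < 0"
  unfolding wfn_def by auto

lemma construct:
  fixes a :: "'n::finite \<Rightarrow> 'n \<Rightarrow> real^'n \<Rightarrow> real" and \<phi> :: "real^'n \<Rightarrow> real"
    and \<Phi> :: "real \<Rightarrow> real" and K :: "(real^'n) set" and R N :: nat and L \<rho> :: real
  assumes dim: "CARD('n) \<ge> 2"
    and phi_meas: "\<phi> \<in> borel_measurable lebesgue"
    and phi_pos: "AE x in lebesgue. \<phi> x > 0"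
    and a_meas: "\<And>i j. a i j \<in> borel_measurable lebesgue"
    and wd: "form_well_defined a \<phi>"
    and Phi_loc: "\<And>S. compact S \<Longrightarrow> S \<subseteq> - K \<Longrightarrow> set_integrable lebesgue S (\<lambda>x. \<Phi> (norm x))"
    and bound: "\<And>x. x \<notin> K \<Longrightarrow> matnorm a x * \<phi> x \<le> \<Phi> (norm x)"
    and K_sub: "K \<subseteq> ball 0 \<rho>" and rho_pos: "0 < \<rho>"
    and R: "real R > \<rho>" and N: "N \<ge> R + 2" and Lpos: "L > 0"
    and IL: "ennreal L \<le> (\<integral>\<^sup>+ y. indicator {y::real^'n. (real R + 1)\<^sup>2 \<le> y \<bullet> y \<and> y \<bullet> y \<le> (real N)\<^sup>2} y * iota \<Phi> CARD('n) y \<partial>lebesgue)"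
    and Ifin: "(\<integral>\<^sup>+ y. indicator {y::real^'n. (real R + 1)\<^sup>2 \<le> y \<bullet> y \<and> y \<bullet> y \<le> (real N)\<^sup>2} y * iota \<Phi> CARD('n) y \<partial>lebesgue) < \<infinity>"
  shows "\<exists>u. C0inf u \<and> (\<forall>x. 0 \<le> u x \<and> u x \<le> 1) \<and> (\<forall>x. norm x \<le> real R \<longrightarrow> u x = 1)
     \<and> (\<forall>x. norm x \<ge> real N + 1 \<longrightarrow> u x = 0)
     \<and> Eform a \<phi> u u \<le> 16 * (real CARD('n) * unit_ball_vol (real CARD('n)))\<^sup>2 / L"
proof -
  define d where "d = CARD('n)"
  have d2: "d \<ge> 2" using dim d_def by simp
  define V where "V = unit_ball_vol (real d)"
  have V: "V > 0" unfolding V_def by simp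
  define cc where "cc = 4 / (real d * V)\<^sup>2"
  have cc: "cc > 0" unfolding cc_def using V d2 by simp
  define \<alpha> where "\<alpha> = (real R)\<^sup>2"
  define a' where "a' = (real R + 1)\<^sup>2"
  define b' where "b' = (real N)\<^sup>2"
  define \<beta> where "\<beta> = (real N + 1)\<^sup>2"
  have R0: "real R > 0" using R rho_pos by simp
  have al: "0 < \<alpha>" "\<alpha> < a'" "a' \<le> b'" "b' < \<beta>"
    unfolding \<alpha>_def a'_def b'_def \<beta>_def using R0 N by (auto intro!: power_strict_mono power_mono)
  have rho_al: "\<rho>\<^sup>2 < \<alpha>" unfolding \<alpha>_def using R rho_pos by (intro power_strict_mono) auto
  define Ann where "Ann = {y::real^'n. a' \<le> y \<bullet> y \<and> y \<bullet> y \<le> b'}"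
  define A where "A = {y::real^'n. \<alpha> \<le> y \<bullet> y \<and> y \<bullet> y \<le> \<beta>}"
  have Ann_def': "Ann = {y::real^'n. (real R + 1)\<^sup>2 \<le> y \<bullet> y \<and> y \<bullet> y \<le> (real N)\<^sup>2}"
    unfolding Ann_def a'_def b'_def ..
  define I where "I = (\<integral>\<^sup>+ y. indicator Ann y * iota \<Phi> d y \<partial>lebesgue)"
  have IL': "ennreal L \<le> I" and Ifin': "I < \<infinity>" using IL Ifin unfolding I_def Ann_def' d_def by auto
  have normA: "real R \<le> norm x" if "x \<in> A" for x
    using that norm_ge_iff_inner[of "real R" x] unfolding A_def \<alpha>_def by auto
  have AnnA: "Ann \<subseteq> A" unfolding Ann_def A_def using al by auto
  have Ac: "compact A" unfolding A_def by (rule compact_shell)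
  have Annc: "compact Ann" unfolding Ann_def by (rule compact_shell)
  have AK: "A \<subseteq> - K"
  proof
    fix x assume "x \<in> A" then have "real R \<le> norm x" by (rule normA)
    then show "x \<in> - K" using K_sub R by (auto simp: dist_norm)
  qed
  have AnnK: "Ann \<subseteq> - K" using AK AnnA by auto
  have PhiA: "set_integrable lebesgue A (\<lambda>x. \<Phi> (norm x))" by (rule Phi_loc[OF Ac AK])
  have PhiAnn: "set_integrable lebesgue Ann (\<lambda>x. \<Phi> (norm x))" by (rule Phi_loc[OF Annc AnnK])
  have Am[measurable]: "A \<in> sets lebesgue" using Ac by (simp add: compact_imp_closed)
  have Annm[measurable]: "Ann \<in> sets lebesgue" using Annc by (simp add: compact_imp_closed)
  define PA where "PA = (\<lambda>x::real^'n. indicator A x * \<Phi> (norm x))"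
  define PAnn where "PAnn = (\<lambda>x::real^'n. indicator Ann x * \<Phi> (norm x))"
  have PAm[measurable]: "PA \<in> borel_measurable lebesgue"
    using PhiA unfolding set_integrable_def PA_def by (auto dest: borel_measurable_integrable)
  have PAnnm[measurable]: "PAnn \<in> borel_measurable lebesgue"
    using PhiAnn unfolding set_integrable_def PAnn_def by (auto dest: borel_measurable_integrable)
  have PAint: "integrable lebesgue PA"
    using PhiA unfolding set_integrable_def PA_def by simp
  define W where "W = (\<lambda>x::real^'n. wfn d (norm x))"
  have Wm[measurable]: "W \<in> borel_measurable lebesgue"
    unfolding W_def wfn_def by (rule measurable_completion) measurable
  have W0: "0 \<le> W x" for x unfolding W_def wfn_def using V by auto
  define WR where "WR = wfn d (real R)"
  have WA: "W x \<le> WR" if "x \<in> A" for x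
    unfolding W_def WR_def by (rule wfn_mono[OF d2 R0 normA[OF that]])
  define Tn where "Tn = (\<lambda>(n::nat) (x::real^'n). indicator Ann x * min (real n) (max 0 (W x / (\<Phi> (norm x) * (x \<bullet> x)))))"
  have Tn_alt: "Tn n = (\<lambda>x. indicator Ann x * min (real n) (max 0 (W x / (PAnn x * (x \<bullet> x)))))" for n
    unfolding Tn_def PAnn_def by (auto simp: fun_eq_iff indicator_def)
  have qm[measurable]: "(\<lambda>x::real^'n. x \<bullet> x) \<in> borel_measurable lebesgue"
    by (rule cont_meas_leb) (intro continuous_intros)
  have Tnm[measurable]: "Tn n \<in> borel_measurable lebesgue" for n unfolding Tn_alt by measurable
  have Tn0: "0 \<le> Tn n x" "Tn n x \<le> real n" for n x unfolding Tn_def by (auto simp: indicator_def)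
  have "\<exists>M. ennreal (cc * L / 2) < (\<integral>\<^sup>+ x. ennreal (W x * Tn M x) \<partial>lebesgue)"
  proof -
    define f where "f = (\<lambda>n x. ennreal (W x * Tn n x))"
    have fm: "f n \<in> borel_measurable lebesgue" for n unfolding f_def by measurable
    have incx: "incseq (\<lambda>n. f n x)" for x
      unfolding incseq_def f_def Tn_def
      by (auto intro!: ennreal_leI mult_left_mono W0 simp: indicator_def)
    have inc: "incseq f" using incx by (auto simp: incseq_def le_fun_def)
    define g where "g = (\<lambda>x. ennreal (indicator Ann x * (W x * max 0 (W x / (\<Phi> (norm x) * (x \<bullet> x))))))"
    have SUPf: "(SUP n. f n x) = g x" for x
    proof (rule LIMSEQ_unique[OF LIMSEQ_SUP[OF incx]])
      obtain n0 :: nat where n0: "max 0 (W x / (\<Phi> (norm x) * (x \<bullet> x))) \<le> real n0"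
        using real_arch_simple by blast
      have "eventually (\<lambda>n. f n x = g x) sequentially"
        using eventually_ge_at_top[of n0]
      proof eventually_elim
        case (elim n)
        then have "max 0 (W x / (\<Phi> (norm x) * (x \<bullet> x))) \<le> real n" using n0 by (smt (verit) of_nat_le_iff)
        then show ?case unfolding f_def g_def Tn_def by (simp add: min_absorb2 mult.left_commute)
      qed
      then show "(\<lambda>n. f n x) \<longlonglongrightarrow> g x" by (rule tendsto_eventually)
    qed
    have intg: "(\<integral>\<^sup>+ x. g x \<partial>lebesgue) = (SUP n. \<integral>\<^sup>+ x. f n x \<partial>lebesgue)"
      using nn_integral_monotone_convergence_SUP[OF inc fm] SUPf by simp
    have iom: "(\<lambda>y. indicator Ann y * iota \<Phi> d y) \<in> borel_measurable lebesgue"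
      by (rule iota_meas[OF PhiAnn Annm])
    have AEfin: "AE x in lebesgue. indicator Ann x * iota \<Phi> d x \<noteq> \<infinity>"
      using nn_integral_PInf_AE[OF iom] Ifin' unfolding I_def by simp
    have "ennreal cc * I = (\<integral>\<^sup>+ x. ennreal cc * (indicator Ann x * iota \<Phi> d x) \<partial>lebesgue)"
      unfolding I_def by (rule nn_integral_cmult[symmetric, OF iom])
    also have "\<dots> \<le> (\<integral>\<^sup>+ x. g x \<partial>lebesgue)"
    proof (rule nn_integral_mono_AE)
      show "AE x in lebesgue. ennreal cc * (indicator Ann x * iota \<Phi> d x) \<le> g x"
        using AEfin
      proof eventually_elim
        case (elim x)
        show ?case
        proof (cases "x \<in> Ann")
          case False then show ?thesis by simp
        next
          case True
          then have io: "iota \<Phi> d x \<noteq> \<infinity>" using elim by simp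
          then have Pnz: "\<Phi> (norm x) \<noteq> 0" unfolding iota_def by auto
          have xx: "x \<bullet> x = (norm x)\<^sup>2" by (simp add: power2_norm_eq_inner)
          have nx: "norm x > 0" using True al unfolding Ann_def by (auto simp: xx)
          show ?thesis
          proof (cases "\<Phi> (norm x) > 0")
            case False
            then have "\<Phi> (norm x) < 0" using Pnz by auto
            then have "norm x powr (2 - 2 * real d) / \<Phi> (norm x) \<le> 0"
              by (simp add: divide_nonneg_neg)
            then have "iota \<Phi> d x = 0" unfolding iota_def using Pnz by (simp add: ennreal_eq_0_iff)
            then show ?thesis by simp
          next
            case True2: True
            have "ennreal cc * (indicator Ann x * iota \<Phi> d x) = ennreal (cc * (norm x powr (2 - 2 * real d) / \<Phi> (norm x)))"
            proof -
              have "0 \<le> norm x powr (2 - 2 * real d) / \<Phi> (norm x)" using True2 by simp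
              then show ?thesis unfolding iota_def using True Pnz True2 cc
                by (simp add: ennreal_mult[symmetric])
            qed
            also have "cc * (norm x powr (2 - 2 * real d) / \<Phi> (norm x)) = W x * (W x / (\<Phi> (norm x) * (norm x)\<^sup>2))"
              unfolding cc_def W_def V_def by (rule iota_alg[OF nx True2 d2])
            also have "\<dots> = indicator Ann x * (W x * max 0 (W x / (\<Phi> (norm x) * (x \<bullet> x))))"
              using True True2 W0[of x] by (simp add: xx)
            finally show ?thesis unfolding g_def by simp
          qed
        qed
      qed
    qed
    finally have gI: "ennreal cc * I \<le> (\<integral>\<^sup>+ x. g x \<partial>lebesgue)" .
    have "ennreal (cc * L / 2) < ennreal (cc * L)" using cc Lpos by (simp add: ennreal_less_iff)
    also have "ennreal (cc * L) = ennreal cc * ennreal L" using cc Lpos by (simp add: ennreal_mult)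
    also have "\<dots> \<le> ennreal cc * I" using IL' by (rule mult_left_mono) simp
    also note gI
    also note intg
    finally have "ennreal (cc * L / 2) < (SUP n. \<integral>\<^sup>+ x. f n x \<partial>lebesgue)" .
    then obtain n where "ennreal (cc * L / 2) < (\<integral>\<^sup>+ x. f n x \<partial>lebesgue)"
      by (auto simp: less_SUP_iff)
    then show ?thesis unfolding f_def by blast
  qed
  then obtain M where M: "ennreal (cc * L / 2) < (\<integral>\<^sup>+ x. ennreal (W x * Tn M x) \<partial>lebesgue)" by blast
  define T where "T = Tn M"
  have Tm[measurable]: "T \<in> borel_measurable lebesgue" unfolding T_def by measurable
  have WTint: "integrable lebesgue (\<lambda>x. W x * T x)"
  proof (rule Bochner_Integration.integrable_bound)
    have "Ann \<in> lmeasurable" using Annc by (rule lmeasurable_compact)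
    then show "integrable lebesgue (\<lambda>x. (WR * real M) * indicator Ann x)"
      by (intro integrable_mult_right) (simp add: lmeasurable_iff_integrable)
    show "(\<lambda>x. W x * T x) \<in> borel_measurable lebesgue" by measurable
    show "AE x in lebesgue. norm (W x * T x) \<le> norm ((WR * real M) * indicator Ann x)"
    proof (rule AE_I2)
      fix x show "norm (W x * T x) \<le> norm ((WR * real M) * indicator Ann x)"
      proof (cases "x \<in> Ann")
        case True
        have "W x * T x \<le> WR * real M"
          using WA[of x] AnnA True Tn0[of M x] W0[of x] unfolding T_def by (intro mult_mono) auto
        moreover have "0 \<le> W x * T x" using W0 Tn0 unfolding T_def by simp
        ultimately show ?thesis using True by simp
      next
        case False then show ?thesis unfolding T_def Tn_def by simp
      qed
    qed
  qed
  define m where "m = integral\<^sup>L lebesgue (\<lambda>x. W x * T x)"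
  have m: "m > cc * L / 2"
  proof -
    have "ennreal m = (\<integral>\<^sup>+ x. ennreal (W x * T x) \<partial>lebesgue)"
      unfolding m_def using WTint W0 Tn0 unfolding T_def
      by (subst nn_integral_eq_integral) auto
    then have "ennreal (cc * L / 2) < ennreal m" using M unfolding T_def by simp
    then show ?thesis using cc Lpos by (subst (asm) ennreal_less_iff) auto
  qed
  have mpos: "m > 0" using m cc Lpos by (smt (verit) divide_pos_pos mult_pos_pos)
  define t where "t = (\<lambda>s. indicator {a'..b'} s * min (real M) (max 0 (wfn d (sqrt s) / (\<Phi> (sqrt s) * s))))"
  have Tt: "T x = t (x \<bullet> x)" for x
    unfolding T_def Tn_def t_def W_def Ann_def by (simp add: norm_eq_sqrt_inner indicator_def)
  have tm: "t \<in> borel_measurable lebesgue"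
  proof (rule borel_measurableI_greater)
    fix c :: real
    show "{s \<in> space lebesgue. c < t s} \<in> sets lebesgue"
    proof (cases "c < 0")
      case True
      then have "{s \<in> space lebesgue. c < t s} = UNIV" unfolding t_def by (auto simp: indicator_def)
      then show ?thesis by simp
    next
      case False
      define B where "B = {s. c < t s}"
      have Bsub: "B \<subseteq> {a'..b'}" unfolding B_def t_def using False by (auto simp: indicator_def)
      have "{x::real^'n. x \<bullet> x \<in> B} = {x \<in> space lebesgue. c < T x}" unfolding B_def by (auto simp: Tt)
      also have "\<dots> \<in> sets lebesgue" by measurable
      finally have "{x::real^'n. x \<bullet> x \<in> B} \<in> sets lebesgue" .
      then have "B \<in> sets lebesgue"
        by (intro radial_sets_lebesgue[where 'a="real^'n", OF _ Bsub]) (use al in auto)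
      then show ?thesis unfolding B_def by simp
    qed
  qed
  obtain \<psi> Nn B\<psi> where \<psi>: "Nn \<in> null_sets lebesgue"
    "\<And>k. smooth1 (\<psi> k)" "\<And>k s. 0 \<le> \<psi> k s" "\<And>k s. \<psi> k s \<le> B\<psi>"
    "\<And>k s. s \<le> \<alpha> \<Longrightarrow> \<psi> k s = 0" "\<And>k s. s \<ge> \<beta> \<Longrightarrow> \<psi> k s = 0"
    "\<And>s. s \<notin> Nn \<Longrightarrow> (\<lambda>k. \<psi> k s) \<longlonglongrightarrow> t s"
  proof (rule approx1D[OF tm, of M a' b' \<alpha> \<beta>])
    show "0 \<le> t s" for s unfolding t_def by (auto simp: indicator_def)
    show "t s \<le> real M" for s unfolding t_def by (auto simp: indicator_def)
    show "s \<notin> {a'..b'} \<Longrightarrow> t s = 0" for s unfolding t_def by simp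
  qed (use al in auto)
  have dimn: "DIM(real^'n) = d" unfolding d_def by simp
  define Nx where "Nx = {x::real^'n. x \<bullet> x \<in> Nn \<inter> {\<alpha>..\<beta>}}"
  have Nx: "Nx \<in> null_sets lebesgue" unfolding Nx_def
    by (rule null_radial[where 'a="real^'n", OF _ \<psi>(1)]) (use al in auto)
  have out0: "\<psi> k (x \<bullet> x) = 0 \<and> T x = 0" if "x \<bullet> x \<notin> {\<alpha>..\<beta>}" for k x
  proof -
    have "x \<bullet> x < \<alpha> \<or> x \<bullet> x > \<beta>" using that by auto
    then have "\<psi> k (x \<bullet> x) = 0" using \<psi>(5)[of "x \<bullet> x" k] \<psi>(6)[of "x \<bullet> x" k] by auto
    moreover have "t (x \<bullet> x) = 0" unfolding t_def using that al by (auto simp: indicator_def)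
    ultimately show ?thesis by (simp add: Tt)
  qed
  have conv: "AE x in lebesgue. (\<lambda>k. \<psi> k (x \<bullet> x)) \<longlonglongrightarrow> T x"
  proof (rule AE_I'[OF Nx])
    show "{x \<in> space lebesgue. \<not> (\<lambda>k. \<psi> k (x \<bullet> x)) \<longlonglongrightarrow> T x} \<subseteq> Nx"
    proof safe
      fix x assume nc: "\<not> (\<lambda>k. \<psi> k (x \<bullet> x)) \<longlonglongrightarrow> T x"
      show "x \<in> Nx"
      proof (rule ccontr)
        assume "x \<notin> Nx"
        show False
        proof (cases "x \<bullet> x \<in> {\<alpha>..\<beta>}")
          case True
          then have "x \<bullet> x \<notin> Nn" using \<open>x \<notin> Nx\<close> unfolding Nx_def by auto
          then show False using \<psi>(7)[of "x \<bullet> x"] nc by (simp add: Tt)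
        next
          case False
          then show False using out0[OF False] nc by simp
        qed
      qed
    qed
  qed
  have \<psi>c: "continuous_on UNIV (\<psi> k)" for k by (rule smooth1_continuous[OF \<psi>(2)])
  have \<psi>qm[measurable]: "(\<lambda>x::real^'n. \<psi> k (x \<bullet> x)) \<in> borel_measurable lebesgue" for k
    by (rule cont_meas_leb) (intro continuous_on_compose2[OF \<psi>c[of k]] continuous_intros, auto)
  have Alm: "A \<in> lmeasurable" using Ac by (rule lmeasurable_compact)
  define w1 where "w1 = (\<lambda>x::real^'n. (WR * B\<psi>) * indicator A x)"
  have w1int: "integrable lebesgue w1" unfolding w1_def using Alm
    by (intro integrable_mult_right) (simp add: lmeasurable_iff_integrable)
  have bd1: "AE x in lebesgue. norm (W x * \<psi> k (x \<bullet> x)) \<le> w1 x" for k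
  proof (rule AE_I2)
    fix x show "norm (W x * \<psi> k (x \<bullet> x)) \<le> w1 x"
    proof (cases "x \<in> A")
      case True
      have "W x * \<psi> k (x \<bullet> x) \<le> WR * B\<psi>"
        using WA[OF True] W0[of x] \<psi>(3)[of k] \<psi>(4)[of k "x \<bullet> x"] by (intro mult_mono) auto
      moreover have "0 \<le> W x * \<psi> k (x \<bullet> x)" using W0 \<psi>(3) by simp
      ultimately show ?thesis using True unfolding w1_def by simp
    next
      case False
      then have "x \<bullet> x \<notin> {\<alpha>..\<beta>}" unfolding A_def by auto
      then show ?thesis using out0 unfolding w1_def using False by simp
    qed
  qed
  have lim1: "AE x in lebesgue. (\<lambda>k. W x * \<psi> k (x \<bullet> x)) \<longlonglongrightarrow> W x * T x"
    using conv by eventually_elim (intro tendsto_intros)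
  have DC1: "(\<lambda>k. integral\<^sup>L lebesgue (\<lambda>x. W x * \<psi> k (x \<bullet> x))) \<longlonglongrightarrow> m"
    unfolding m_def by (rule integral_dominated_convergence[OF _ _ w1int lim1 bd1]) measurable
  have int1: "integrable lebesgue (\<lambda>x. W x * \<psi> k (x \<bullet> x))" for k
    by (rule integrable_dominated_convergence2[OF _ _ w1int lim1 bd1]) measurable
  define w2 where "w2 = (\<lambda>x::real^'n. \<bar>PA x\<bar> * (B\<psi>\<^sup>2 * \<beta>))"
  have w2int: "integrable lebesgue w2" unfolding w2_def using PAint by (intro integrable_mult_left integrable_abs)
  have bd2: "AE x in lebesgue. norm (PA x * ((\<psi> k (x \<bullet> x))\<^sup>2 * (x \<bullet> x))) \<le> w2 x" for k
  proof (rule AE_I2)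
    fix x show "norm (PA x * ((\<psi> k (x \<bullet> x))\<^sup>2 * (x \<bullet> x))) \<le> w2 x"
    proof (cases "x \<in> A")
      case True
      have "(\<psi> k (x \<bullet> x))\<^sup>2 \<le> B\<psi>\<^sup>2" using \<psi>(3,4) by (intro power_mono) auto
      moreover have "x \<bullet> x \<le> \<beta>" "0 \<le> x \<bullet> x" using True unfolding A_def by auto
      ultimately have "(\<psi> k (x \<bullet> x))\<^sup>2 * (x \<bullet> x) \<le> B\<psi>\<^sup>2 * \<beta>" by (intro mult_mono) auto
      moreover have "0 \<le> (\<psi> k (x \<bullet> x))\<^sup>2 * (x \<bullet> x)" by simp
      ultimately show ?thesis unfolding w2_def by (simp add: abs_mult mult_left_mono)
    next
      case False then show ?thesis unfolding w2_def PA_def by simp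
    qed
  qed
  have lim2: "AE x in lebesgue. (\<lambda>k. PA x * ((\<psi> k (x \<bullet> x))\<^sup>2 * (x \<bullet> x))) \<longlonglongrightarrow> PA x * ((T x)\<^sup>2 * (x \<bullet> x))"
    using conv by eventually_elim (intro tendsto_intros)
  define Einf where "Einf = integral\<^sup>L lebesgue (\<lambda>x. PA x * ((T x)\<^sup>2 * (x \<bullet> x)))"
  have DC2: "(\<lambda>k. integral\<^sup>L lebesgue (\<lambda>x. PA x * ((\<psi> k (x \<bullet> x))\<^sup>2 * (x \<bullet> x)))) \<longlonglongrightarrow> Einf"
    unfolding Einf_def by (rule integral_dominated_convergence[OF _ _ w2int lim2 bd2]) measurable
  have intE: "integrable lebesgue (\<lambda>x. PA x * ((T x)\<^sup>2 * (x \<bullet> x)))"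
    by (rule integrable_dominated_convergence[OF _ _ w2int lim2 bd2]) measurable
  have Einf_le: "Einf \<le> m"
    unfolding Einf_def m_def
  proof (rule integral_mono[OF intE WTint])
    fix x
    show "PA x * ((T x)\<^sup>2 * (x \<bullet> x)) \<le> W x * T x"
    proof (cases "T x = 0")
      case True then show ?thesis by simp
    next
      case False
      then have xAnn: "x \<in> Ann" unfolding T_def Tn_def by (auto simp: indicator_def)
      define r where "r = W x / (\<Phi> (norm x) * (x \<bullet> x))"
      have Tx: "T x = min (real M) (max 0 r)" using xAnn unfolding T_def Tn_def r_def by simp
      have T0: "0 \<le> T x" unfolding T_def by (rule Tn0)
      then have "T x > 0" using False by simp
      then have rpos: "r > 0" using Tx by (auto simp: min_def max_def split: if_splits)
      have Wpos: "W x \<ge> 0" by (rule W0)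
      have Pq: "\<Phi> (norm x) * (x \<bullet> x) > 0"
      proof (rule ccontr)
        assume "\<not> 0 < \<Phi> (norm x) * (x \<bullet> x)"
        then have "\<Phi> (norm x) * (x \<bullet> x) \<le> 0" by simp
        then have "r \<le> 0" unfolding r_def using Wpos by (simp add: divide_nonneg_nonpos)
        then show False using rpos by simp
      qed
      have PAx: "PA x = \<Phi> (norm x)" using xAnn AnnA unfolding PA_def by auto
      have "T x \<le> r" using Tx rpos by simp
      then have "\<Phi> (norm x) * (x \<bullet> x) * T x \<le> \<Phi> (norm x) * (x \<bullet> x) * r"
        using Pq by (intro mult_left_mono) auto
      also have "\<dots> = W x"
      proof -
        have gen: "\<And>p::real. p > 0 \<Longrightarrow> p * (W x / p) = W x" by simp
        show ?thesis unfolding r_def by (rule gen[OF Pq])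
      qed
      finally have "(\<Phi> (norm x) * (x \<bullet> x) * T x) * T x \<le> W x * T x"
        using T0 by (intro mult_right_mono) auto
      then show ?thesis unfolding PAx by (simp add: power2_eq_square mult_ac)
    qed
  qed
  have "eventually (\<lambda>k. m / 2 < integral\<^sup>L lebesgue (\<lambda>x. W x * \<psi> k (x \<bullet> x))) sequentially"
    by (rule order_tendstoD(1)[OF DC1]) (use mpos in simp)
  moreover have "eventually (\<lambda>k. integral\<^sup>L lebesgue (\<lambda>x. PA x * ((\<psi> k (x \<bullet> x))\<^sup>2 * (x \<bullet> x))) < 2 * m) sequentially"
    by (rule order_tendstoD(2)[OF DC2]) (use mpos Einf_le in simp)
  ultimately obtain k where k1: "m / 2 < integral\<^sup>L lebesgue (\<lambda>x. W x * \<psi> k (x \<bullet> x))"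
    and k2: "integral\<^sup>L lebesgue (\<lambda>x. PA x * ((\<psi> k (x \<bullet> x))\<^sup>2 * (x \<bullet> x))) < 2 * m"
    by (metis (mono_tags, lifting) eventually_conj_iff eventually_sequentially order_refl)
  define c where "c = integral {\<alpha>-1..\<beta>} (\<psi> k)"
  define ck where "ck = integral\<^sup>L lebesgue (\<lambda>x. W x * \<psi> k (x \<bullet> x))"
  have "ennreal ck = (\<integral>\<^sup>+ x. ennreal (W x * \<psi> k (x \<bullet> x)) \<partial>lebesgue)"
    unfolding ck_def using int1[of k] W0 \<psi>(3) by (subst nn_integral_eq_integral) auto
  also have "\<dots> = (\<integral>\<^sup>+ x. ennreal (wfn DIM(real^'n) (norm (x::real^'n)) * \<psi> k (x \<bullet> x)) \<partial>lborel)"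
    unfolding W_def dimn by (rule nn_integral_completion)
  also have "\<dots> = (\<integral>\<^sup>+ s. ennreal (\<psi> k s) \<partial>lborel)"
    by (rule int_identity[where 'a="real^'n" and a=\<alpha> and b=\<beta> and \<psi>="\<psi> k", symmetric])
       (use d2 dimn al \<psi>c \<psi>(3) \<psi>(5) \<psi>(6) in auto)
  also have "\<dots> = (\<integral>\<^sup>+ s\<in>{\<alpha>-1..\<beta>}. ennreal (\<psi> k s) \<partial>lborel)"
  proof (rule nn_integral_cong)
    fix s :: real
    have "s \<notin> {\<alpha>-1..\<beta>} \<Longrightarrow> \<psi> k s = 0" using \<psi>(5,6) by (cases "s \<le> \<alpha>") auto
    then show "ennreal (\<psi> k s) = ennreal (\<psi> k s) * indicator {\<alpha>-1..\<beta>} s" by (auto simp: indicator_def)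
  qed
  also have "\<dots> = ennreal (integral {\<alpha>-1..\<beta>} (\<psi> k) - integral {\<alpha>-1..\<alpha>-1} (\<psi> k))"
  proof (rule nn_integral_FTC_Icc)
    show "\<psi> k \<in> borel_measurable borel" by (rule borel_measurable_continuous_onI[OF \<psi>c])
    show "((\<lambda>s. integral {\<alpha>-1..s} (\<psi> k)) has_real_derivative \<psi> k x) (at x)" for x
      by (rule antideriv_deriv[OF \<psi>c \<psi>(5)])
    show "0 \<le> \<psi> k x" for x by (rule \<psi>(3))
  qed (use al in auto)
  also have "\<dots> = ennreal c" unfolding c_def by simp
  finally have cck: "ennreal ck = ennreal c" .
  have ckpos: "ck > m / 2" using k1 unfolding ck_def .
  then have "ck > 0" using mpos by simp
  then have "0 < ennreal ck" by simp
  then have "0 < ennreal c" by (simp only: cck)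
  then have cpos: "c > 0" by (simp add: ennreal_less_zero_iff)
  have cck': "c = ck" using cck cpos \<open>ck > 0\<close> by (simp add: ennreal_inj)
  define u where "u = (\<lambda>x::real^'n. 1 - integral {\<alpha>-1..x \<bullet> x} (\<psi> k) / c)"
  have rho0: "0 \<le> \<rho>" using rho_pos by simp
  have ab: "\<alpha> \<le> \<beta>" using al by simp
  have cpos': "0 < integral {\<alpha>-1..\<beta>} (\<psi> k)" using cpos c_def by simp
  note bu = build_u[where \<psi>="\<psi> k" and \<alpha>=\<alpha> and \<beta>=\<beta>, OF phi_meas phi_pos a_meas wd Phi_loc bound K_sub
      rho0 rho_al ab \<psi>(2)[of k] \<psi>(3)[of k] \<psi>(5)[of _ k] \<psi>(6)[of _ k] cpos', folded c_def, folded u_def]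
  have Eu: "Eform a \<phi> u u \<le> 4 / c\<^sup>2 * integral\<^sup>L lebesgue (\<lambda>x. PA x * ((\<psi> k (x \<bullet> x))\<^sup>2 * (x \<bullet> x)))"
    using bu(6) unfolding PA_def A_def by (simp add: mult.assoc)
  have "4 / c\<^sup>2 * integral\<^sup>L lebesgue (\<lambda>x. PA x * ((\<psi> k (x \<bullet> x))\<^sup>2 * (x \<bullet> x))) \<le> 4 / c\<^sup>2 * (2 * m)"
    using k2 by (intro mult_left_mono) auto
  also have "\<dots> \<le> 4 / (m / 2)\<^sup>2 * (2 * m)"
  proof -
    have "(m / 2)\<^sup>2 \<le> c\<^sup>2" using ckpos cck' mpos by (intro power_mono) auto
    then have "4 / c\<^sup>2 \<le> 4 / (m / 2)\<^sup>2" using mpos cpos by (intro divide_left_mono) auto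
    then show ?thesis using mpos by (intro mult_right_mono) auto
  qed
  also have "\<dots> = 32 / m" using mpos by (simp add: power2_eq_square field_simps)
  also have "\<dots> \<le> 32 / (cc * L / 2)" using m cc Lpos mpos by (intro divide_left_mono) auto
  also have "\<dots> = 16 * (real d * V)\<^sup>2 / L" unfolding cc_def using V d2 Lpos by (simp add: field_simps)
  finally have Efin: "Eform a \<phi> u u \<le> 16 * (real CARD('n) * unit_ball_vol (real CARD('n)))\<^sup>2 / L"
    using Eu unfolding d_def V_def by simp
  show ?thesis
  proof (intro exI[of _ u] conjI allI impI)
    show "C0inf u" by (rule bu(1))
    fix x
    show "0 \<le> u x" using bu(2)[of x] by (simp add: u_def)
    show "u x \<le> 1" using bu(3)[of x] by (simp add: u_def)
  next
    fix x :: "real^'n" assume "norm x \<le> real R"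
    then have "x \<bullet> x \<le> \<alpha>" unfolding \<alpha>_def using norm_le_iff_inner[of "real R" x] by simp
    then show "u x = 1" using bu(4)[of x] by (simp add: u_def)
  next
    fix x :: "real^'n" assume "norm x \<ge> real N + 1"
    then have "x \<bullet> x \<ge> \<beta>" unfolding \<beta>_def using norm_ge_iff_inner[of "real N + 1" x] by simp
    then show "u x = 0" using bu(5)[of x] by (simp add: u_def)
  next
    show "Eform a \<phi> u u \<le> 16 * (real CARD('n) * unit_ball_vol (real CARD('n)))\<^sup>2 / L" by (rule Efin)
  qed
qed

lemma phi_measurable:
  fixes \<phi> :: "real^'n::finite \<Rightarrow> real"
  assumes phi_loc: "\<And>S. compact S \<Longrightarrow> set_integrable lebesgue S \<phi>"
  shows "\<phi> \<in> borel_measurable lebesgue"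
proof (rule borel_measurable_LIMSEQ_real)
  show "(\<lambda>x. indicator (cball 0 (real n)) x * \<phi> x) \<in> borel_measurable lebesgue" for n
    using phi_loc[of "cball 0 (real n)"] unfolding set_integrable_def
    by (auto dest: borel_measurable_integrable)
  fix x :: "real^'n"
  obtain n0 :: nat where "norm x \<le> real n0" using real_arch_simple by blast
  have "eventually (\<lambda>n. indicator (cball 0 (real n)) x * \<phi> x = \<phi> x) sequentially"
    using eventually_ge_at_top[of n0]
  proof eventually_elim
    case (elim n) then have "real n0 \<le> real n" by simp
    then have "norm x \<le> real n" using \<open>norm x \<le> real n0\<close> by linarith
    then show ?case by (simp add: dist_norm)
  qed
  then show "(\<lambda>n. indicator (cball 0 (real n)) x * \<phi> x) \<longlonglongrightarrow> \<phi> x" by (rule tendsto_eventually)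
qed

lemma pd_zero: "pd i (\<lambda>x::real^'n::finite. 0) x = 0"
proof -
  have "((\<lambda>x::real^'n. 0::real) has_derivative (\<lambda>h. 0)) (at x)" by simp
  then have "frechet_derivative (\<lambda>x::real^'n. 0::real) (at x) = (\<lambda>h. 0)"
    by (rule frechet_derivative_at[symmetric])
  then show ?thesis unfolding pd_def by simp
qed

lemma Eform_zero: "Eform a \<phi> (\<lambda>x::real^'n::finite. 0) (\<lambda>x. 0) = 0"
  unfolding Eform_def pd_zero by simp

lemma C0inf_cont: "C0inf u \<Longrightarrow> continuous_on UNIV u"
proof -
  assume "C0inf u"
  then have "\<And>x. iter_pd [] u differentiable (at x)" unfolding C0inf_def smooth_fun_def by blast
  then show ?thesis
    by (intro continuous_at_imp_continuous_on) (auto intro: differentiable_imp_continuous_within)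
qed

lemma closure_graph_C0inf:
  fixes a :: "'n::finite \<Rightarrow> 'n \<Rightarrow> real^'n \<Rightarrow> real" and \<phi> :: "real^'n \<Rightarrow> real" and u :: "real^'n \<Rightarrow> real"
  assumes phi_loc: "\<And>S. compact S \<Longrightarrow> set_integrable lebesgue S \<phi>"
    and phi_meas: "\<phi> \<in> borel_measurable lebesgue"
    and Cu: "C0inf u" and u01: "\<And>x. 0 \<le> u x \<and> u x \<le> 1" and usupp: "\<And>x. norm x \<ge> r \<Longrightarrow> u x = 0"
  shows "closure_graph a \<phi> u (Eform a \<phi> u u)"
  unfolding closure_graph_def
proof (intro conjI)
  show um: "u \<in> borel_measurable lebesgue" by (rule cont_meas_leb[OF C0inf_cont[OF Cu]])
  let ?C = "cball (0::real^'n) r"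
  have int: "integrable lebesgue (\<lambda>x. indicator ?C x *\<^sub>R \<phi> x)"
    using phi_loc[of ?C] unfolding set_integrable_def by simp
  then have fin: "(\<integral>\<^sup>+ x. ennreal (norm (indicator ?C x *\<^sub>R \<phi> x)) \<partial>lebesgue) < \<infinity>"
    by (simp add: integrable_iff_bounded)
  have pm[measurable]: "(\<lambda>x. ennreal (\<phi> x)) \<in> borel_measurable lebesgue" using phi_meas by measurable
  have "(\<integral>\<^sup>+ x. ennreal ((u x)\<^sup>2) \<partial>wmeasure \<phi>) = (\<integral>\<^sup>+ x. ennreal (\<phi> x) * ennreal ((u x)\<^sup>2) \<partial>lebesgue)"
    unfolding wmeasure_def using um by (subst nn_integral_density) auto
  also have "\<dots> \<le> (\<integral>\<^sup>+ x. ennreal (norm (indicator ?C x *\<^sub>R \<phi> x)) \<partial>lebesgue)"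
  proof (rule nn_integral_mono)
    fix x
    show "ennreal (\<phi> x) * ennreal ((u x)\<^sup>2) \<le> ennreal (norm (indicator ?C x *\<^sub>R \<phi> x))"
    proof (cases "x \<in> ?C")
      case True
      have "(u x)\<^sup>2 \<le> 1" using u01[of x] by (simp add: power_le_one)
      then have "ennreal (\<phi> x) * ennreal ((u x)\<^sup>2) \<le> ennreal (\<phi> x) * 1"
        by (intro mult_left_mono) (auto intro: ennreal_leI)
      also have "\<dots> \<le> ennreal (norm (indicator ?C x *\<^sub>R \<phi> x))" using True by (auto intro: ennreal_leI)
      finally show ?thesis .
    next
      case False
      then have "u x = 0" using usupp[of x] by (auto simp: dist_norm)
      then show ?thesis by simp
    qed
  qed
  finally show "(\<integral>\<^sup>+ x. ennreal ((u x)\<^sup>2) \<partial>wmeasure \<phi>) < \<infinity>" using fin by simp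
  show "\<exists>f. (\<forall>k. C0inf (f k)) \<and> L2_conv (wmeasure \<phi>) f u \<and> E_cauchy a \<phi> f \<and> (\<lambda>k. Eform a \<phi> (f k) (f k)) \<longlonglongrightarrow> Eform a \<phi> u u"
  proof (intro exI[of _ "\<lambda>_. u"] conjI allI)
    show "C0inf u" by (rule Cu)
    show "L2_conv (wmeasure \<phi>) (\<lambda>_. u) u" unfolding L2_conv_def by simp
    show "E_cauchy a \<phi> (\<lambda>_. u)" unfolding E_cauchy_def by (simp add: Eform_zero)
  qed simp
qed

theorem theorem4p3:
  fixes a :: "'n::finite \<Rightarrow> 'n \<Rightarrow> real^'n \<Rightarrow> real"
    and \<phi> :: "real^'n \<Rightarrow> real"
    and \<Phi> :: "real \<Rightarrow> real"
    and K :: "(real^'n) set"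
    and \<rho> :: real
  assumes dim: "CARD('n) \<ge> 2"
    and phi_loc: "\<And>S. compact S \<Longrightarrow> set_integrable lebesgue S \<phi>"
    and phi_pos: "AE x in lebesgue. \<phi> x > 0"
    and a_meas: "\<And>i j. a i j \<in> borel_measurable lebesgue"
    and a_sym: "\<And>i j x. a i j x = a j i x"
    and wd: "form_well_defined a \<phi>"
    and pos: "form_positive a \<phi>"
    and clos: "form_closable a \<phi>"
    and K_compact: "compact K"
    and Phi_loc: "\<And>S. compact S \<Longrightarrow> S \<subseteq> - K \<Longrightarrow> set_integrable lebesgue S (\<lambda>x. \<Phi> (norm x))"
    and bound: "\<And>x. x \<notin> K \<Longrightarrow> matnorm a x * \<phi> x \<le> \<Phi> (norm x)"
    and rho_pos: "\<rho> > 0"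
    and K_sub: "K \<subseteq> ball 0 \<rho>"
    and an_fin: "\<And>n. real n > \<rho> \<Longrightarrow> a_seq TYPE('n) \<Phi> \<rho> n < \<infinity>"
    and an_lim: "filterlim (a_seq TYPE('n) \<Phi> \<rho>) (nhds \<infinity>) sequentially"
  shows "closure_recurrent a \<phi>"
proof -
  have phi_meas: "\<phi> \<in> borel_measurable lebesgue" by (rule phi_measurable[OF phi_loc])
  define D where "D = 16 * (real CARD('n) * unit_ball_vol (real CARD('n)))\<^sup>2"
  have V: "unit_ball_vol (real CARD('n)) > 0" by simp
  have "real CARD('n) * unit_ball_vol (real CARD('n)) > 0" using V dim by (intro mult_pos_pos) auto
  then have Dpos: "D > 0" unfolding D_def by (intro mult_pos_pos zero_less_power) auto
  define Q where "Q = (\<lambda>(R::nat) (k::nat) (N::nat) (u::real^'n \<Rightarrow> real). N > R \<and> C0inf u \<and> (\<forall>x. 0 \<le> u x \<and> u x \<le> 1)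
      \<and> (\<forall>x. norm x \<le> real R \<longrightarrow> u x = 1) \<and> (\<forall>x. norm x \<ge> real N \<longrightarrow> u x = 0)
      \<and> Eform a \<phi> u u \<le> 1 / (real k + 1))"
  have ex: "\<exists>N u. Q R k N u" if R: "real R > \<rho>" for R k
  proof -
    define L where "L = D * (real k + 1)"
    have Lpos: "L > 0" unfolding L_def using Dpos by simp
    obtain N :: nat where N: "N \<ge> R + 2"
      "ennreal L \<le> (\<integral>\<^sup>+ y. indicator {y::real^'n. (real R + 1)\<^sup>2 \<le> y \<bullet> y \<and> y \<bullet> y \<le> (real N)\<^sup>2} y * iota \<Phi> CARD('n) y \<partial>lebesgue)"
      "(\<integral>\<^sup>+ y. indicator {y::real^'n. (real R + 1)\<^sup>2 \<le> y \<bullet> y \<and> y \<bullet> y \<le> (real N)\<^sup>2} y * iota \<Phi> CARD('n) y \<partial>lebesgue) < \<infinity>"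
      using choose_annulus[OF Phi_loc rho_pos K_sub an_fin an_lim R, of L] by blast
    obtain u where u: "C0inf u" "\<forall>x. 0 \<le> u x \<and> u x \<le> 1" "\<forall>x. norm x \<le> real R \<longrightarrow> u x = 1"
      "\<forall>x. norm x \<ge> real N + 1 \<longrightarrow> u x = 0" "Eform a \<phi> u u \<le> D / L"
      using construct[OF dim phi_meas phi_pos a_meas wd Phi_loc bound K_sub rho_pos R N(1) Lpos N(2) N(3)]
      unfolding D_def by blast
    have "D / L = 1 / (real k + 1)" unfolding L_def using Dpos by simp
    then have "Q R k (N + 1) u" unfolding Q_def using u N(1) by auto
    then show ?thesis by blast
  qed
  define Nf where "Nf = (\<lambda>R k. SOME N. \<exists>u. Q R k N u)"
  define uf where "uf = (\<lambda>R k. SOME u. Q R k (Nf R k) u)"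
  have Qf: "Q R k (Nf R k) (uf R k)" if "real R > \<rho>" for R k
  proof -
    have "\<exists>u. Q R k (Nf R k) u" unfolding Nf_def by (rule someI_ex) (rule ex[OF that])
    then show ?thesis unfolding uf_def by (rule someI_ex)
  qed
  define R0 :: nat where "R0 = nat (ceiling \<rho>) + 1"
  have R0: "real R0 > \<rho>" unfolding R0_def by linarith
  define Rs where "Rs = rec_nat R0 (\<lambda>k r. Nf r k)"
  have Rs0: "Rs 0 = R0" and RsS: "Rs (Suc k) = Nf (Rs k) k" for k unfolding Rs_def by simp_all
  have Rsr: "real (Rs k) > \<rho>" for k
  proof (induction k)
    case 0 then show ?case using R0 Rs0 by simp
  next
    case (Suc k)
    then have "Nf (Rs k) k > Rs k" using Qf[OF Suc] unfolding Q_def by simp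
    then show ?case using Suc RsS by simp
  qed
  have Rsinc: "Rs (Suc k) > Rs k" for k using Qf[OF Rsr[of k]] RsS unfolding Q_def by simp
  have Rsk: "Rs k \<ge> k" for k
  proof (induction k)
    case (Suc k) then show ?case using Rsinc[of k] by simp
  qed simp
  define u where "u = (\<lambda>k. uf (Rs k) k)"
  have uQ: "Q (Rs k) k (Rs (Suc k)) (u k)" for k unfolding u_def RsS using Qf[OF Rsr] .
  have uC: "C0inf (u k)" and u01: "\<And>x. 0 \<le> u k x \<and> u k x \<le> 1"
    and u1: "\<And>x. norm x \<le> real (Rs k) \<Longrightarrow> u k x = 1"
    and u0: "\<And>x. norm x \<ge> real (Rs (Suc k)) \<Longrightarrow> u k x = 0"
    and uE: "Eform a \<phi> (u k) (u k) \<le> 1 / (real k + 1)" for k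
    using uQ[of k] unfolding Q_def by auto
  define c where "c = (\<lambda>k. Eform a \<phi> (u k) (u k))"
  show ?thesis
    unfolding closure_recurrent_def
  proof (intro exI[of _ u] exI[of _ c] conjI allI)
    show "closure_graph a \<phi> (u n) (c n)" for n
      unfolding c_def by (rule closure_graph_C0inf[OF phi_loc phi_meas uC u01 u0])
    show "AE x in lebesgue. 0 \<le> u n x \<and> u n x \<le> 1" for n using u01 by simp
    show "AE x in lebesgue. incseq (\<lambda>n. u n x) \<and> (\<lambda>n. u n x) \<longlonglongrightarrow> 1"
    proof (rule AE_I2, rule conjI)
      fix x :: "real^'n"
      show "incseq (\<lambda>n. u n x)"
      proof (rule incseq_SucI)
        fix n
        show "u n x \<le> u (Suc n) x"
        proof (cases "norm x \<le> real (Rs (Suc n))")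
          case True then show ?thesis using u1[of x "Suc n"] u01[of n x] by simp
        next
          case False then show ?thesis using u0[of n x] u01[of "Suc n" x] by simp
        qed
      qed
      obtain n0 :: nat where n0: "norm x \<le> real n0" using real_arch_simple by blast
      have "eventually (\<lambda>n. u n x = 1) sequentially"
        using eventually_ge_at_top[of n0]
      proof eventually_elim
        case (elim n)
        then have "real n0 \<le> real (Rs n)" using Rsk[of n] by simp
        then have "norm x \<le> real (Rs n)" using n0 by linarith
        then show ?case by (rule u1)
      qed
      then show "(\<lambda>n. u n x) \<longlonglongrightarrow> 1" by (rule tendsto_eventually)
    qed
    show "c \<longlonglongrightarrow> 0"
    proof (rule tendsto_sandwich[of "\<lambda>_. 0" _ _ "\<lambda>k. 1 / (real k + 1)"])
      show "eventually (\<lambda>k. 0 \<le> c k) sequentially"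
        using pos uC unfolding form_positive_def c_def by auto
      show "eventually (\<lambda>k. c k \<le> 1 / (real k + 1)) sequentially"
        using uE unfolding c_def by auto
      show "(\<lambda>k. 1 / (real k + 1)) \<longlonglongrightarrow> 0"
        using LIMSEQ_inverse_real_of_nat by (simp add: inverse_eq_divide add.commute)
    qed simp
  qed
qed

end
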